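(* Let $Q\subseteq\mathbb{R}^2$ be a rational maximal lattice-free quadrilateral with vertices $a=(a_1,a_2)$, $b=(b_1,b_2)$, $c$, $d$ such that $(0,0)$ lies in the relative interior of the edge $[b,c]$, $(1,0)$ in the relative interior of $[b,d]$, $(0,1)$ in the relative interior of $[a,c]$, and $(1,1)$ in the relative interior of $[a,d]$; suppose $0<a_1\le b_1<1$, $1<a_2$, $b_2<0$, $-b_2\le a_2-1$, that the lattice width satisfies $w(Q)=a_2-b_2$, and in addition $a_1=b_1$. Let $w:=w(Q)$. Then for every $z>1$, $$P^{Q}(z)\ge\begin{cases}0 & \text{if } 1<z\le w,\\ \frac{(z-w)(2wz-w-z)}{w^2(z-1)^2} & \text{if } w<z\le\frac{w}{w-1},\\ \frac{(z-w)(2wz-w-z)+(w-1)^2(z-1)^2-1}{w^2(z-1)^2} & \text{if } \frac{w}{w-1}<z<+\infty.\end{cases}$$ Moreover, for every fixed $z>1$, $P^{Q}(z)$ tends to $1$ as $w$ tends to $1$ (over quadrilaterals satisfying these assumptions).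
   Context: A closed convex set $B\subseteq\mathbb{R}^2$ with non-empty interior is lattice-free if its interior contains no point of $\mathbb{Z}^2$, and maximal lattice-free if it is not properly contained in another lattice-free closed convex set. A split is a set $\{x\in\mathbb{R}^2: b\le a_1x_1+a_2x_2\le b+1\}$ with $a_1,a_2$ coprime integers and $b\in\mathbb{Z}$. For $f\in\mathbb{R}^2$ and rays $r^1,\dots,r^n\in\mathbb{R}^2\setminus\{0\}$ let $R_f^n:=\mathrm{conv}\{s\in\mathbb{R}^n_+: f+\sum_{j=1}^n r^js_j\in\mathbb{Z}^2\}$. For a lattice-free polyhedron $B$ with $f$ in its interior, $\psi^B$ is the Minkowski functional of $B-f$, $\psi^B(r)=\min\{\lambda>0:r\in\lambda(B-f)\}$ (taken as $0$ if $r\in\lambda(B-f)$ for all $\lambda>0$), and the cut associated with $B$ is $\sum_j\psi^B(r^j)s_j\ge1$. Let $\mathcal S$ be the set of all splits containing $f$ in their interior; for a set $\mathcal L$ of such polyhedra, $\mathcal L(R_f^n)$ is the set of $s\ge0$ satisfying the cuts associated with all members of $\mathcal L$. For polyhedra $P\subseteq Q'\subseteq\mathbb{R}^n_+$ with $P$ of covering type, $\alpha P:=\{x:\alpha x\in P\}$ ($\alpha P:=\mathbb{R}^n_+$ for $\alpha=+\infty$), and the strength $t(P,Q')$ is the minimum $\alpha\ge1$ with $Q'\subseteq\alpha P$. For a maximal lattice-free quadrilateral $Q$ with vertices $v^1,\dots,v^4$ and $f\in\mathrm{int}(Q)$, take $n=4$ and the corner rays $r^j=v^j-f$, and let $\mathcal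 F=\mathcal S\cup\{Q\}$. Define $$P^Q(z):=\frac{1}{\mathrm{Area}(Q)}\int_{f\in\mathrm{int}(Q)}\mathbf 1\{t(\mathcal F(R_f^4),\mathcal S(R_f^4))\le z\}\,df.$$ The lattice width is $w(Q):=\min_{u\in\mathbb{Z}^2\setminus\{0\}}\left(\max_{x\in Q}u^Tx-\min_{x\in Q}u^Tx\right)$. *)

theory Defs
  imports "HOL-Analysis.Analysis"
begin

definition lattice :: "(real \<times> real) set" where
  "lattice = {x. fst x \<in> \<int> \<and> snd x \<in> \<int>}"

definition lattice_free :: "(real \<times> real) set \<Rightarrow> bool" where
  "lattice_free B \<longleftrightarrow> closed B \<and> convex B \<and> interior B \<noteq> {} \<and> interior B \<inter> lattice = {}"

definition maximal_lattice_free :: "(real \<times> real) set \<Rightarrow> bool" where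
  "maximal_lattice_free B \<longleftrightarrow> lattice_free B \<and> \<not> (\<exists>B'. lattice_free B' \<and> B \<subset> B')"

definition is_split :: "(real \<times> real) set \<Rightarrow> bool" where
  "is_split S \<longleftrightarrow> (\<exists>a1 a2 b :: int. coprime a1 a2 \<and>
      S = {x. of_int b \<le> of_int a1 * fst x + of_int a2 * snd x \<and>
              of_int a1 * fst x + of_int a2 * snd x \<le> of_int b + 1})"

definition splits_at :: "real \<times> real \<Rightarrow> (real \<times> real) set set" where
  "splits_at f = {S. is_split S \<and> f \<in> interior S}"

definition nonneg_orthant :: "(real ^ 'n) set" where
  "nonneg_orthant = {s. \<forall>j. 0 \<le> s $ j}"

text \<open>Minkowski functional of B - f.\<close>
definition psi :: "(real \<times> real) set \<Rightarrow> real \<times> real \<Rightarrow> real \<times> real \<Rightarrow> real" where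
  "psi B f r = (if (\<forall>t>0. r \<in> (\<lambda>x. t *\<^sub>R (x - f)) ` B) then 0
                else Inf {t. t > 0 \<and> r \<in> (\<lambda>x. t *\<^sub>R (x - f)) ` B})"

definition cut_closure :: "(real \<times> real) set set \<Rightarrow> real \<times> real \<Rightarrow> ('n::finite \<Rightarrow> real \<times> real) \<Rightarrow> (real ^ 'n) set" where
  "cut_closure L f r = {s. (\<forall>j. 0 \<le> s $ j) \<and> (\<forall>B\<in>L. (\<Sum>j\<in>UNIV. psi B f (r j) * s $ j) \<ge> 1)}"

definition scale_set :: "ereal \<Rightarrow> (real ^ 'n) set \<Rightarrow> (real ^ 'n) set" where
  "scale_set \<alpha> P = (if \<alpha> = \<infinity> then nonneg_orthant else {x. real_of_ereal \<alpha> *\<^sub>R x \<in> P})"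

definition strength :: "(real ^ 'n) set \<Rightarrow> (real ^ 'n) set \<Rightarrow> ereal" where
  "strength P Q' = Inf {\<alpha>::ereal. 1 \<le> \<alpha> \<and> Q' \<subseteq> scale_set \<alpha> P}"

definition PQ :: "(4 \<Rightarrow> real \<times> real) \<Rightarrow> real \<Rightarrow> real" where
  "PQ v z = (let Q = convex hull (range v) in
     measure lebesgue {f \<in> interior Q.
        strength (cut_closure (splits_at f \<union> {Q}) f (\<lambda>j. v j - f))
                 (cut_closure (splits_at f) f (\<lambda>j. v j - f)) \<le> ereal z}
     / measure lebesgue Q)"

definition lattice_width :: "(real \<times> real) set \<Rightarrow> real" where
  "lattice_width Q = Inf {(SUP x\<in>Q. u \<bullet> x) - (INF x\<in>Q. u \<bullet> x) | u. u \<in> lattice \<and> u \<noteq> 0}"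

definition quad_vertices :: "real \<times> real \<Rightarrow> real \<times> real \<Rightarrow> real \<times> real \<Rightarrow> real \<times> real \<Rightarrow> 4 \<Rightarrow> real \<times> real" where
  "quad_vertices a b c d = (\<lambda>j. if j = 0 then a else if j = 1 then b else if j = 2 then c else d)"

definition cor1_hyp :: "real \<times> real \<Rightarrow> real \<times> real \<Rightarrow> real \<times> real \<Rightarrow> real \<times> real \<Rightarrow> bool" where
  "cor1_hyp a b c d \<longleftrightarrow> (let Q = convex hull {a, b, c, d} in
      (\<forall>v\<in>{a, b, c, d}. fst v \<in> \<rat> \<and> snd v \<in> \<rat>) \<and>
      card {a, b, c, d} = 4 \<and>
      {x. x extreme_point_of Q} = {a, b, c, d} \<and>
      maximal_lattice_free Q \<and>
      (0, 0) \<in> open_segment b c \<and> (1, 0) \<in> open_segment b d \<and>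
      (0, 1) \<in> open_segment a c \<and> (1, 1) \<in> open_segment a d \<and>
      0 < fst a \<and> fst a \<le> fst b \<and> fst b < 1 \<and> 1 < snd a \<and> snd b < 0 \<and>
      - snd b \<le> snd a - 1 \<and>
      lattice_width Q = snd a - snd b \<and>
      fst a = fst b)"

definition cor1_bound :: "real \<Rightarrow> real \<Rightarrow> real" where
  "cor1_bound w z = (if z \<le> w then 0
     else if z \<le> w / (w - 1) then (z - w) * (2 * w * z - w - z) / (w\<^sup>2 * (z - 1)\<^sup>2)
     else ((z - w) * (2 * w * z - w - z) + (w - 1)\<^sup>2 * (z - 1)\<^sup>2 - 1) / (w\<^sup>2 * (z - 1)\<^sup>2))"

end

theory Submission imports Defs begin

lemma affine_has_integral:
  fixes y0 y1 c0 c1 :: real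
  assumes "y0 \<le> y1"
  shows "((\<lambda>y. c0 + c1*y) has_integral (c0*(y1-y0) + c1*(y1^2-y0^2)/2)) {y0<..<y1}"
proof -
  have "((\<lambda>y. c0 + c1*y) has_integral ((c0*y1 + c1*y1^2/2) - (c0*y0 + c1*y0^2/2))) {y0..y1}"
    apply (rule fundamental_theorem_of_calculus[OF assms])
    apply (auto intro!: derivative_eq_intros simp: has_real_derivative_iff_has_vector_derivative[symmetric])
    done
  moreover have "(c0*y1 + c1*y1^2/2) - (c0*y0 + c1*y0^2/2) = c0*(y1-y0) + c1*(y1^2-y0^2)/2"
    by (simp add: field_simps)
  ultimately show ?thesis
    by (subst has_integral_Icc_iff_Ioo[symmetric]) simp
qed

definition trap :: "real \<Rightarrow> real \<Rightarrow> real \<Rightarrow> real \<Rightarrow> real \<Rightarrow> real \<Rightarrow> (real\<times>real) set" where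
  "trap y0 y1 l0 l1 r0 r1 = {p::real\<times>real. y0 < snd p \<and> snd p < y1 \<and> l0 + l1 * snd p < fst p \<and> fst p < r0 + r1 * snd p}"

lemma trap_measure0:
  fixes y0 y1 l0 l1 r0 r1 :: real
  assumes y01: "y0 \<le> y1" and lr: "\<And>y. y0 \<le> y \<Longrightarrow> y \<le> y1 \<Longrightarrow> l0 + l1*y \<le> r0 + r1*y"
  shows "{p::real\<times>real. y0 < snd p \<and> snd p < y1 \<and> l0 + l1* snd p < fst p \<and> fst p < r0 + r1* snd p} \<in> sets lebesgue"
    and "measure lebesgue {p::real\<times>real. y0 < snd p \<and> snd p < y1 \<and> l0 + l1* snd p < fst p \<and> fst p < r0 + r1* snd p}
           = (r0-l0)*(y1-y0) + (r1-l1)*(y1^2-y0^2)/2"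
proof -
  define T where "T = {p::real\<times>real. y0 < snd p \<and> snd p < y1 \<and> l0 + l1* snd p < fst p \<and> fst p < r0 + r1* snd p}"
  have Tb: "T \<in> sets borel"
    unfolding T_def by (intro borel_open open_Collect_conj open_Collect_less continuous_intros)
  show "T \<in> sets lebesgue" using Tb by simp
  have sl: "(\<lambda>x. (x, y)) -` T = (if y0 < y \<and> y < y1 then {l0 + l1*y <..< r0 + r1*y} else {})" for y
    by (auto simp: T_def)
  have "emeasure lborel T = emeasure (lborel \<Otimes>\<^sub>M lborel) T"
    by (simp add: lborel_prod)
  also have "\<dots> = (\<integral>\<^sup>+y. emeasure lborel ((\<lambda>x. (x, y)) -` T) \<partial>lborel)"
    by (rule lborel_pair.emeasure_pair_measure_alt2) (subst lborel_prod, simp add: Tb)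
  also have "\<dots> = (\<integral>\<^sup>+y. ennreal ((r0-l0) + (r1-l1)*y) * indicator {y0<..<y1} y \<partial>lborel)"
    apply (rule nn_integral_cong)
    using lr by (auto simp: sl indicator_def algebra_simps)
  also have "\<dots> = ennreal ((r0-l0)*(y1-y0) + (r1-l1)*(y1^2-y0^2)/2)"
    apply (rule nn_integral_has_integral_lebesgue')
    using lr apply (force simp: algebra_simps)
    by (rule affine_has_integral[OF y01])
  finally have "emeasure lborel T = ennreal ((r0-l0)*(y1-y0) + (r1-l1)*(y1^2-y0^2)/2)" .
  moreover have "0 \<le> (r0-l0)*(y1-y0) + (r1-l1)*(y1^2-y0^2)/2"
  proof -
    have "((\<lambda>y. (r0-l0) + (r1-l1)*y) has_integral ((r0-l0)*(y1-y0) + (r1-l1)*(y1^2-y0^2)/2)) {y0<..<y1}"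
      by (rule affine_has_integral[OF y01])
    then show ?thesis
      by (rule has_integral_nonneg) (use lr in \<open>force simp: algebra_simps\<close>)
  qed
  ultimately have "measure lborel T = (r0-l0)*(y1-y0) + (r1-l1)*(y1^2-y0^2)/2"
    by (simp add: measure_def)
  then show "measure lebesgue T = (r0-l0)*(y1-y0) + (r1-l1)*(y1^2-y0^2)/2"
    using Tb by simp
qed

lemma mem_scaled_image:
  fixes B :: "(real\<times>real) set"
  assumes "t > 0"
  shows "r \<in> (\<lambda>x. t *\<^sub>R (x - f)) ` B \<longleftrightarrow> f + (1/t) *\<^sub>R r \<in> B"
proof
  assume "r \<in> (\<lambda>x. t *\<^sub>R (x - f)) ` B"
  then obtain x where "x \<in> B" "r = t *\<^sub>R (x - f)" by auto
  then have "(1/t) *\<^sub>R r = x - f" using assms by simp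
  then have "f + (1/t) *\<^sub>R r = x" by (simp add: algebra_simps)
  then show "f + (1/t) *\<^sub>R r \<in> B" using \<open>x \<in> B\<close> by simp
next
  assume "f + (1/t) *\<^sub>R r \<in> B"
  moreover have "r = t *\<^sub>R ((f + (1/t) *\<^sub>R r) - f)" using assms by simp
  ultimately show "r \<in> (\<lambda>x. t *\<^sub>R (x - f)) ` B" by blast
qed

definition slab :: "real \<Rightarrow> real \<Rightarrow> real \<Rightarrow> (real\<times>real) set" where
  "slab p1 p2 c = {x. c \<le> p1 * fst x + p2 * snd x \<and> p1 * fst x + p2 * snd x \<le> c + 1}"

definition slabpsi :: "real \<Rightarrow> real \<Rightarrow> real \<Rightarrow> real\<times>real \<Rightarrow> real\<times>real \<Rightarrow> real" where
  "slabpsi p1 p2 c f r = max ((p1 * fst r + p2 * snd r) / (c + 1 - (p1 * fst f + p2 * snd f)))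
                             (- (p1 * fst r + p2 * snd r) / ((p1 * fst f + p2 * snd f) - c))"

lemma psi_slab:
  assumes lo: "c < p1 * fst f + p2 * snd f" and hi: "p1 * fst f + p2 * snd f < c + 1"
  shows "psi (slab p1 p2 c) f r = slabpsi p1 p2 c f r"
proof -
  define p where "p = p1 * fst r + p2 * snd r"
  define L where "L = p1 * fst f + p2 * snd f - c"
  define H where "H = c + 1 - (p1 * fst f + p2 * snd f)"
  define M where "M = max (p / H) (- p / L)"
  have L0: "L > 0" and H0: "H > 0" using lo hi by (auto simp: L_def H_def)
  have Meq: "slabpsi p1 p2 c f r = M" by (simp add: slabpsi_def M_def p_def L_def H_def)
  have M0: "M \<ge> 0" using L0 H0 by (cases "p \<ge> 0") (auto simp: M_def le_max_iff_disj intro: divide_nonneg_pos divide_nonpos_pos)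
  have key: "r \<in> (\<lambda>x. t *\<^sub>R (x - f)) ` slab p1 p2 c \<longleftrightarrow> M \<le> t" if t: "t > 0" for t
  proof -
    have "r \<in> (\<lambda>x. t *\<^sub>R (x - f)) ` slab p1 p2 c \<longleftrightarrow> f + (1/t) *\<^sub>R r \<in> slab p1 p2 c"
      by (rule mem_scaled_image[OF t])
    also have "\<dots> \<longleftrightarrow> -L \<le> p / t \<and> p / t \<le> H"
      by (simp add: slab_def L_def H_def p_def algebra_simps add_divide_distrib)
    also have "\<dots> \<longleftrightarrow> -p / L \<le> t \<and> p / H \<le> t"
      using t L0 H0 by (auto simp: field_simps)
    also have "\<dots> \<longleftrightarrow> M \<le> t" by (auto simp: M_def)
    finally show ?thesis .
  qed
  show ?thesis
  proof (cases "M > 0")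
    case True
    have nall: "\<not> (\<forall>t>0. r \<in> (\<lambda>x. t *\<^sub>R (x - f)) ` slab p1 p2 c)"
      using key[of "M/2"] True by (auto intro!: exI[of _ "M/2"])
    have set: "{t. t > 0 \<and> r \<in> (\<lambda>x. t *\<^sub>R (x - f)) ` slab p1 p2 c} = {M..}"
      using key True by force
    show ?thesis unfolding psi_def if_not_P[OF nall] set Meq by simp
  next
    case False
    then have "M = 0" using M0 by simp
    then have "\<forall>t>0. r \<in> (\<lambda>x. t *\<^sub>R (x - f)) ` slab p1 p2 c" using key by simp
    then show ?thesis unfolding psi_def using \<open>M = 0\<close> Meq by simp
  qed
qed

lemma slabpsi_nonneg:
  assumes lo: "c < p1 * fst f + p2 * snd f" and hi: "p1 * fst f + p2 * snd f < c + 1"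
  shows "slabpsi p1 p2 c f r \<ge> 0"
proof -
  define p where "p = p1 * fst r + p2 * snd r"
  show ?thesis using lo hi
    by (cases "p \<ge> 0") (auto simp: slabpsi_def p_def[symmetric] le_max_iff_disj intro: divide_nonneg_pos divide_nonpos_pos)
qed


lemma psi_vertex:
  fixes K :: "(real\<times>real) set"
  assumes f: "f \<in> interior K" and v: "v extreme_point_of K"
  shows "psi K f (v - f) = 1"
proof -
  have vK: "v \<in> K" using v by (simp add: extreme_point_of_def)
  have fK: "f \<in> K" using f interior_subset by blast
  have vint: "v \<notin> interior K" by (rule extreme_point_not_in_interior[OF v])
  have ge1: "1 \<le> t" if t: "t > 0" "v - f \<in> (\<lambda>x. t *\<^sub>R (x - f)) ` K" for t
  proof (rule ccontr)
    assume "\<not> 1 \<le> t"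
    then have t1: "t < 1" by simp
    from t obtain x where xK: "x \<in> K" and vx: "v - f = t *\<^sub>R (x - f)" by auto
    then have veq: "v = (1 - t) *\<^sub>R f + t *\<^sub>R x" by (simp add: algebra_simps)
    show False
    proof (cases "x = f")
      case True
      then have "v = f" using veq by (simp add: algebra_simps)
      then show False using f vint by simp
    next
      case False
      then have "v \<in> open_segment f x" using veq t(1) t1 by (auto simp: in_segment)
      then show False using v fK xK by (auto simp: extreme_point_of_def)
    qed
  qed
  have one: "v - f \<in> (\<lambda>x. 1 *\<^sub>R (x - f)) ` K" using vK by auto
  have nall: "\<not> (\<forall>t>0. v - f \<in> (\<lambda>x. t *\<^sub>R (x - f)) ` K)"
    using ge1[of "1/2"] by (auto intro!: exI[of _ "1/2::real"])
  have "Inf {t. t > 0 \<and> v - f \<in> (\<lambda>x. t *\<^sub>R (x - f)) ` K} = 1"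
    apply (rule cInf_eq_minimum)
    using one ge1 by auto
  then show ?thesis unfolding psi_def if_not_P[OF nall] .
qed


lemma strength_char:
  fixes r :: "'n::finite \<Rightarrow> real\<times>real" and z :: real
  assumes z: "z > 1" and psiK: "\<And>j. psi K f (r j) = 1"
  shows "strength (cut_closure (L \<union> {K}) f r) (cut_closure L f r) \<le> ereal z \<longleftrightarrow>
         (\<forall>s\<in>cut_closure L f r. 1/z \<le> (\<Sum>j\<in>UNIV. s $ j))"
proof -
  define P where "P = cut_closure (L \<union> {K}) f r"
  define Q' where "Q' = cut_closure L f r"
  define A where "A = {\<alpha>::ereal. 1 \<le> \<alpha> \<and> Q' \<subseteq> scale_set \<alpha> P}"
  have memP: "s \<in> P \<longleftrightarrow> s \<in> Q' \<and> 1 \<le> (\<Sum>j\<in>UNIV. s $ j)" for s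
    by (auto simp: P_def Q'_def cut_closure_def psiK)
  have str: "strength P Q' = Inf A" by (simp add: strength_def A_def)
  show ?thesis
    unfolding P_def[symmetric] Q'_def[symmetric] str
  proof
    assume le: "Inf A \<le> ereal z"
    show "\<forall>s\<in>Q'. 1/z \<le> (\<Sum>j\<in>UNIV. s $ j)"
    proof (rule ccontr)
      assume "\<not> (\<forall>s\<in>Q'. 1/z \<le> (\<Sum>j\<in>UNIV. s $ j))"
      then obtain s where sQ: "s \<in> Q'" and ss: "(\<Sum>j\<in>UNIV. s $ j) < 1/z" by force
      define \<sigma> where "\<sigma> = (\<Sum>j\<in>UNIV. s $ j)"
      define c where "c = (if \<sigma> > 0 then ereal (1/\<sigma>) else \<infinity>)"
      have cz: "ereal z < c"
      proof (cases "\<sigma> > 0")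
        case True
        then have "z < 1/\<sigma>" using ss z unfolding \<sigma>_def[symmetric] by (simp add: field_simps)
        then show ?thesis using True by (simp add: c_def)
      qed (simp add: c_def)
      have "c \<le> \<alpha>" if "\<alpha> \<in> A" for \<alpha>
      proof (cases \<alpha>)
        case (real a)
        with that have a1: "1 \<le> a" and sub: "Q' \<subseteq> {x. a *\<^sub>R x \<in> P}"
          by (auto simp: A_def scale_set_def)
        then have "a *\<^sub>R s \<in> P" using sQ by auto
        then have "1 \<le> (\<Sum>j\<in>UNIV. a * s $ j)" using memP by simp
        then have 1: "1 \<le> a * \<sigma>" by (simp add: \<sigma>_def sum_distrib_left)
        show ?thesis
        proof (cases "\<sigma> > 0")
          case True
          then have "1/\<sigma> \<le> a" using 1 by (simp add: field_simps)
          then show ?thesis using True real by (simp add: c_def)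
        next
          case False
          then have "a * \<sigma> \<le> 0" using a1 by (simp add: mult_nonneg_nonpos)
          then show ?thesis using 1 by simp
        qed
      next
        case PInf then show ?thesis by simp
      next
        case MInf then show ?thesis using that by (simp add: A_def)
      qed
      then have "c \<le> Inf A" by (rule Inf_greatest)
      then show False using le cz by simp
    qed
  next
    assume all: "\<forall>s\<in>Q'. 1/z \<le> (\<Sum>j\<in>UNIV. s $ j)"
    have "ereal z \<in> A"
    proof -
      have "z *\<^sub>R s \<in> P" if sQ: "s \<in> Q'" for s
      proof -
        have s0: "\<forall>j. 0 \<le> s $ j" and cuts: "\<forall>B\<in>L. 1 \<le> (\<Sum>j\<in>UNIV. psi B f (r j) * s $ j)"
          using sQ by (auto simp: Q'_def cut_closure_def)
        have "z *\<^sub>R s \<in> Q'"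
          unfolding Q'_def cut_closure_def
        proof (intro CollectI conjI allI ballI)
          show "0 \<le> (z *\<^sub>R s) $ j" for j using s0 z by simp
          fix B assume "B \<in> L"
          then have "1 \<le> (\<Sum>j\<in>UNIV. psi B f (r j) * s $ j)" using cuts by blast
          also have "\<dots> \<le> z * (\<Sum>j\<in>UNIV. psi B f (r j) * s $ j)"
            using calculation z by (simp add: mult_le_cancel_right1 order.trans[OF _ mult_right_mono[of 1 z]])
          also have "\<dots> = (\<Sum>j\<in>UNIV. psi B f (r j) * (z *\<^sub>R s) $ j)"
            by (simp add: sum_distrib_left algebra_simps)
          finally show "1 \<le> (\<Sum>j\<in>UNIV. psi B f (r j) * (z *\<^sub>R s) $ j)" .
        qed
        moreover have "1 \<le> (\<Sum>j\<in>UNIV. (z *\<^sub>R s) $ j)"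
        proof -
          have "1 = z * (1/z)" using z by simp
          also have "\<dots> \<le> z * (\<Sum>j\<in>UNIV. s $ j)" using all sQ z by (intro mult_left_mono) auto
          finally show ?thesis by (simp add: sum_distrib_left)
        qed
        ultimately show ?thesis using memP by simp
      qed
      then show ?thesis using z by (auto simp: A_def scale_set_def)
    qed
    then show "Inf A \<le> ereal z" by (rule Inf_lower)
  qed
qed


lemma interior_slab:
  assumes "(p1, p2) \<noteq> (0, 0)"
  shows "interior (slab p1 p2 c) = {x. c < p1 * fst x + p2 * snd x \<and> p1 * fst x + p2 * snd x < c + 1}"
proof -
  have eq: "slab p1 p2 c = {x. (p1, p2) \<bullet> x \<ge> c} \<inter> {x. (p1, p2) \<bullet> x \<le> c + 1}"
    by (auto simp: slab_def inner_prod_def)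
  have nz: "(p1, p2) \<noteq> (0::real\<times>real)" using assms by (simp add: zero_prod_def)
  show ?thesis
    unfolding eq interior_Int interior_halfspace_ge[OF nz] interior_halfspace_le[OF nz]
    by (auto simp: inner_prod_def)
qed

lemma is_split_slab: "is_split S \<longleftrightarrow> (\<exists>a1 a2 b::int. coprime a1 a2 \<and> S = slab (of_int a1) (of_int a2) (of_int b))"
  by (simp add: is_split_def slab_def)

lemma coprime_nz: "coprime (a1::int) a2 \<Longrightarrow> (real_of_int a1, real_of_int a2) \<noteq> (0, 0)"
  by auto

lemma cut_splits_char:
  fixes r :: "'n::finite \<Rightarrow> real\<times>real"
  shows "s \<in> cut_closure (splits_at f) f r \<longleftrightarrow> (\<forall>j. 0 \<le> s $ j) \<and>
     (\<forall>a1 a2 b::int. coprime a1 a2 \<longrightarrow> of_int b < of_int a1 * fst f + of_int a2 * snd f \<longrightarrow>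
        of_int a1 * fst f + of_int a2 * snd f < of_int b + 1 \<longrightarrow>
        1 \<le> (\<Sum>j\<in>UNIV. slabpsi (of_int a1) (of_int a2) (of_int b) f (r j) * s $ j))"
proof -
  have "(\<forall>B\<in>splits_at f. 1 \<le> (\<Sum>j\<in>UNIV. psi B f (r j) * s $ j)) \<longleftrightarrow>
     (\<forall>a1 a2 b::int. coprime a1 a2 \<longrightarrow> of_int b < of_int a1 * fst f + of_int a2 * snd f \<longrightarrow>
        of_int a1 * fst f + of_int a2 * snd f < of_int b + 1 \<longrightarrow>
        1 \<le> (\<Sum>j\<in>UNIV. slabpsi (of_int a1) (of_int a2) (of_int b) f (r j) * s $ j))"
  proof (intro iffI allI impI ballI)
    fix a1 a2 b :: int
    assume all: "\<forall>B\<in>splits_at f. 1 \<le> (\<Sum>j\<in>UNIV. psi B f (r j) * s $ j)"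
      and cp: "coprime a1 a2" and lo: "of_int b < of_int a1 * fst f + of_int a2 * snd f"
      and hi: "of_int a1 * fst f + of_int a2 * snd f < of_int b + 1"
    have "slab (of_int a1) (of_int a2) (of_int b) \<in> splits_at f"
      unfolding splits_at_def is_split_slab
      using cp lo hi by (auto simp: interior_slab[OF coprime_nz[OF cp]])
    then have "1 \<le> (\<Sum>j\<in>UNIV. psi (slab (of_int a1) (of_int a2) (of_int b)) f (r j) * s $ j)"
      using all by blast
    then show "1 \<le> (\<Sum>j\<in>UNIV. slabpsi (of_int a1) (of_int a2) (of_int b) f (r j) * s $ j)"
      using psi_slab[OF lo hi] by simp
  next
    fix B assume all: "\<forall>a1 a2 b::int. coprime a1 a2 \<longrightarrow> of_int b < of_int a1 * fst f + of_int a2 * snd f \<longrightarrow>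
        of_int a1 * fst f + of_int a2 * snd f < of_int b + 1 \<longrightarrow>
        1 \<le> (\<Sum>j\<in>UNIV. slabpsi (of_int a1) (of_int a2) (of_int b) f (r j) * s $ j)"
      and B: "B \<in> splits_at f"
    then obtain a1 a2 b :: int where cp: "coprime a1 a2" and Bq: "B = slab (of_int a1) (of_int a2) (of_int b)"
      and fi: "f \<in> interior B"
      unfolding splits_at_def is_split_slab by blast
    have lo: "of_int b < of_int a1 * fst f + of_int a2 * snd f"
      and hi: "of_int a1 * fst f + of_int a2 * snd f < of_int b + 1"
      using fi unfolding Bq interior_slab[OF coprime_nz[OF cp]] by auto
    show "1 \<le> (\<Sum>j\<in>UNIV. psi B f (r j) * s $ j)"
      using all cp lo hi unfolding Bq psi_slab[OF lo hi] by blast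
  qed
  then show ?thesis by (simp add: cut_closure_def)
qed


lemma fst_borel[measurable]: "(fst :: real\<times>real \<Rightarrow> real) \<in> borel_measurable borel"
  by (intro borel_measurable_continuous_onI continuous_intros)
lemma snd_borel[measurable]: "(snd :: real\<times>real \<Rightarrow> real) \<in> borel_measurable borel"
  by (intro borel_measurable_continuous_onI continuous_intros)

lemma slabpsi_meas:
  fixes V :: "'n::finite \<Rightarrow> real\<times>real"
  shows "(\<lambda>f. \<Sum>j\<in>UNIV. slabpsi p1 p2 c f (V j - f) * q j) \<in> borel_measurable borel"
  unfolding slabpsi_def fst_diff snd_diff
  by measurable


lemma meas_test:
  fixes V :: "'n::finite \<Rightarrow> real\<times>real" and z :: real
  shows "{f. \<forall>g::'n\<Rightarrow>rat. \<not>((\<forall>j. 0 \<le> g j) \<and> (\<Sum>j\<in>UNIV. real_of_rat (g j)) < 1/z \<and>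
      (\<forall>i::int\<times>int\<times>int. coprime (fst i) (fst (snd i)) \<longrightarrow> of_int (snd (snd i)) < of_int (fst i) * fst f + of_int (fst (snd i)) * snd f \<longrightarrow>
        of_int (fst i) * fst f + of_int (fst (snd i)) * snd f < of_int (snd (snd i)) + 1 \<longrightarrow>
        1 \<le> (\<Sum>j\<in>UNIV. slabpsi (of_int (fst i)) (of_int (fst (snd i))) (of_int (snd (snd i))) f (V j - f) * real_of_rat (g j))))} \<in> sets borel"
proof -
  note slabpsi_meas[measurable]
  have "Measurable.pred borel (\<lambda>f. \<forall>g::'n\<Rightarrow>rat. \<not>((\<forall>j. 0 \<le> g j) \<and> (\<Sum>j\<in>UNIV. real_of_rat (g j)) < 1/z \<and>
      (\<forall>i::int\<times>int\<times>int. coprime (fst i) (fst (snd i)) \<longrightarrow> of_int (snd (snd i)) < of_int (fst i) * fst f + of_int (fst (snd i)) * snd f \<longrightarrow>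
        of_int (fst i) * fst f + of_int (fst (snd i)) * snd f < of_int (snd (snd i)) + 1 \<longrightarrow>
        1 \<le> (\<Sum>j\<in>UNIV. slabpsi (of_int (fst i)) (of_int (fst (snd i))) (of_int (snd (snd i))) f (V j - f) * real_of_rat (g j)))))"
    by measurable
  then show ?thesis by (simp add: pred_def)
qed


definition splitcond :: "real\<times>real \<Rightarrow> (int\<times>int\<times>int) \<Rightarrow> (real\<times>real \<Rightarrow> real\<times>real \<Rightarrow> real \<Rightarrow> real) \<Rightarrow> bool" where
  "splitcond f i F \<longleftrightarrow> (coprime (fst i) (fst (snd i)) \<longrightarrow> of_int (snd (snd i)) < of_int (fst i) * fst f + of_int (fst (snd i)) * snd f \<longrightarrow>
        of_int (fst i) * fst f + of_int (fst (snd i)) * snd f < of_int (snd (snd i)) + 1 \<longrightarrow>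
        1 \<le> F (of_int (fst i), of_int (fst (snd i))) f (of_int (snd (snd i))))"

lemma cut_splits_char3:
  fixes r :: "'n::finite \<Rightarrow> real\<times>real"
  shows "s \<in> cut_closure (splits_at f) f r \<longleftrightarrow> (\<forall>j. 0 \<le> s $ j) \<and>
     (\<forall>i::int\<times>int\<times>int. coprime (fst i) (fst (snd i)) \<longrightarrow> of_int (snd (snd i)) < of_int (fst i) * fst f + of_int (fst (snd i)) * snd f \<longrightarrow>
        of_int (fst i) * fst f + of_int (fst (snd i)) * snd f < of_int (snd (snd i)) + 1 \<longrightarrow>
        1 \<le> (\<Sum>j\<in>UNIV. slabpsi (of_int (fst i)) (of_int (fst (snd i))) (of_int (snd (snd i))) f (r j) * s $ j))"
  unfolding cut_splits_char by auto

lemma cut_splits_mono: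
  fixes r :: "'n::finite \<Rightarrow> real\<times>real"
  assumes s: "s \<in> cut_closure (splits_at f) f r" and le: "\<And>j. s $ j \<le> s' $ j"
  shows "s' \<in> cut_closure (splits_at f) f r"
  unfolding cut_splits_char
proof (intro conjI allI impI)
  show "0 \<le> s' $ j" for j using s le[of j] unfolding cut_splits_char by (meson order.trans)
  fix a1 a2 b :: int
  assume cp: "coprime a1 a2" and lo: "of_int b < of_int a1 * fst f + of_int a2 * snd f"
      and hi: "of_int a1 * fst f + of_int a2 * snd f < of_int b + 1"
  have "1 \<le> (\<Sum>j\<in>UNIV. slabpsi (of_int a1) (of_int a2) (of_int b) f (r j) * s $ j)"
    using s cp lo hi unfolding cut_splits_char by blast
  also have "\<dots> \<le> (\<Sum>j\<in>UNIV. slabpsi (of_int a1) (of_int a2) (of_int b) f (r j) * s' $ j)"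
    by (intro sum_mono mult_left_mono le slabpsi_nonneg[OF lo hi])
  finally show "1 \<le> (\<Sum>j\<in>UNIV. slabpsi (of_int a1) (of_int a2) (of_int b) f (r j) * s' $ j)" .
qed

lemma rat_approx_vec:
  fixes s :: "real^'n::finite"
  assumes "(\<Sum>j\<in>UNIV. s $ j) < c"
  shows "\<exists>g::'n\<Rightarrow>rat. (\<forall>j. s $ j < of_rat (g j)) \<and> (\<Sum>j\<in>UNIV. real_of_rat (g j)) < c"
proof -
  define \<delta> where "\<delta> = (c - (\<Sum>j\<in>UNIV. s $ j)) / real (card (UNIV::'n set))"
  have cardpos: "real (card (UNIV::'n set)) > 0" by simp
  have d0: "\<delta> > 0" using assms cardpos by (simp add: \<delta>_def)
  have "\<forall>j. \<exists>q::rat. s $ j < of_rat q \<and> of_rat q < s $ j + \<delta>"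
    using d0 by (intro allI of_rat_dense) simp
  then obtain g where g: "\<And>j. s $ j < of_rat (g j) \<and> of_rat (g j) < s $ j + \<delta>" by metis
  have "(\<Sum>j\<in>UNIV. real_of_rat (g j)) < (\<Sum>j\<in>UNIV. s $ j + \<delta>)"
    by (rule sum_strict_mono) (use g in auto)
  also have "\<dots> = (\<Sum>j\<in>UNIV. s $ j) + real (card (UNIV::'n set)) * \<delta>"
    by (simp add: sum.distrib)
  also have "\<dots> = c" using cardpos by (simp add: \<delta>_def)
  finally show ?thesis using g by blast
qed

lemma G_meas:
  fixes V :: "'n::finite \<Rightarrow> real\<times>real" and z :: real
  shows "{f \<in> interior K. \<forall>s \<in> cut_closure (splits_at f) f (\<lambda>j. V j - f). 1/z \<le> (\<Sum>j\<in>UNIV. s $ j)} \<in> sets lebesgue"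
proof -
  define X where "X = {f. \<forall>g::'n\<Rightarrow>rat. \<not>((\<forall>j. 0 \<le> g j) \<and> (\<Sum>j\<in>UNIV. real_of_rat (g j)) < 1/z \<and>
      (\<forall>i::int\<times>int\<times>int. coprime (fst i) (fst (snd i)) \<longrightarrow> of_int (snd (snd i)) < of_int (fst i) * fst f + of_int (fst (snd i)) * snd f \<longrightarrow>
        of_int (fst i) * fst f + of_int (fst (snd i)) * snd f < of_int (snd (snd i)) + 1 \<longrightarrow>
        1 \<le> (\<Sum>j\<in>UNIV. slabpsi (of_int (fst i)) (of_int (fst (snd i))) (of_int (snd (snd i))) f (V j - f) * real_of_rat (g j))))}"
  have Xb: "X \<in> sets borel" unfolding X_def by (rule meas_test)
  have eq: "(\<forall>s \<in> cut_closure (splits_at f) f (\<lambda>j. V j - f). 1/z \<le> (\<Sum>j\<in>UNIV. s $ j)) \<longleftrightarrow> f \<in> X" for f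
  proof
    assume all: "\<forall>s \<in> cut_closure (splits_at f) f (\<lambda>j. V j - f). 1/z \<le> (\<Sum>j\<in>UNIV. s $ j)"
    show "f \<in> X" unfolding X_def
    proof (intro CollectI allI notI)
      fix g :: "'n \<Rightarrow> rat"
      assume H: "(\<forall>j. 0 \<le> g j) \<and> (\<Sum>j\<in>UNIV. real_of_rat (g j)) < 1/z \<and>
      (\<forall>i::int\<times>int\<times>int. coprime (fst i) (fst (snd i)) \<longrightarrow> of_int (snd (snd i)) < of_int (fst i) * fst f + of_int (fst (snd i)) * snd f \<longrightarrow>
        of_int (fst i) * fst f + of_int (fst (snd i)) * snd f < of_int (snd (snd i)) + 1 \<longrightarrow>
        1 \<le> (\<Sum>j\<in>UNIV. slabpsi (of_int (fst i)) (of_int (fst (snd i))) (of_int (snd (snd i))) f (V j - f) * real_of_rat (g j)))"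
      define q where "q = (\<chi> j. real_of_rat (g j))"
      have "q \<in> cut_closure (splits_at f) f (\<lambda>j. V j - f)"
        unfolding cut_splits_char3 q_def using H by (simp add: zero_le_of_rat_iff)
      then have "1/z \<le> (\<Sum>j\<in>UNIV. q $ j)" using all by blast
      then show False using H by (simp add: q_def)
    qed
  next
    assume fX: "f \<in> X"
    show "\<forall>s \<in> cut_closure (splits_at f) f (\<lambda>j. V j - f). 1/z \<le> (\<Sum>j\<in>UNIV. s $ j)"
    proof (rule ccontr)
      assume "\<not> ?thesis"
      then obtain s where sQ: "s \<in> cut_closure (splits_at f) f (\<lambda>j. V j - f)"
        and ss: "(\<Sum>j\<in>UNIV. s $ j) < 1/z" by force
      obtain g where g: "\<And>j. s $ j < of_rat (g j)" and gs: "(\<Sum>j\<in>UNIV. real_of_rat (g j)) < 1/z"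
        using rat_approx_vec[OF ss] by blast
      define q where "q = (\<chi> j. real_of_rat (g j))"
      have "q \<in> cut_closure (splits_at f) f (\<lambda>j. V j - f)"
        by (rule cut_splits_mono[OF sQ]) (use g in \<open>simp add: q_def less_imp_le\<close>)
      then have "(\<forall>j. 0 \<le> g j) \<and>
      (\<forall>i::int\<times>int\<times>int. coprime (fst i) (fst (snd i)) \<longrightarrow> of_int (snd (snd i)) < of_int (fst i) * fst f + of_int (fst (snd i)) * snd f \<longrightarrow>
        of_int (fst i) * fst f + of_int (fst (snd i)) * snd f < of_int (snd (snd i)) + 1 \<longrightarrow>
        1 \<le> (\<Sum>j\<in>UNIV. slabpsi (of_int (fst i)) (of_int (fst (snd i))) (of_int (snd (snd i))) f (V j - f) * real_of_rat (g j)))"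
        unfolding cut_splits_char3 q_def by (simp add: zero_le_of_rat_iff)
      then show False using fX gs unfolding X_def by blast
    qed
  qed
  have "{f \<in> interior K. \<forall>s \<in> cut_closure (splits_at f) f (\<lambda>j. V j - f). 1/z \<le> (\<Sum>j\<in>UNIV. s $ j)} = interior K \<inter> X"
    using eq by blast
  moreover have "interior K \<inter> X \<in> sets borel" using Xb by (intro sets.Int) (auto intro: borel_open)
  ultimately show ?thesis by simp
qed


lemma trap_open: "open (trap y0 y1 l0 l1 r0 r1)"
  unfolding trap_def by (intro open_Collect_conj open_Collect_less continuous_intros)

lemma trap_sets: "trap y0 y1 l0 l1 r0 r1 \<in> sets lebesgue"
  using trap_open by (intro sets_completionI_sets) (auto intro: borel_open)

lemma trap_measure:
  assumes "y0 \<le> y1" "\<And>y. y0 \<le> y \<Longrightarrow> y \<le> y1 \<Longrightarrow> l0 + l1*y \<le> r0 + r1*y"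
  shows "measure lebesgue (trap y0 y1 l0 l1 r0 r1) = (r0-l0)*(y1-y0) + (r1-l1)*(y1^2-y0^2)/2"
  unfolding trap_def by (rule trap_measure0(2)[OF assms])

lemma trap_fmeas:
  assumes "y0 \<le> y1" "\<And>y. y0 \<le> y \<Longrightarrow> y \<le> y1 \<Longrightarrow> l0 + l1*y \<le> r0 + r1*y"
  shows "trap y0 y1 l0 l1 r0 r1 \<in> fmeasurable lebesgue"
proof -
  have "trap y0 y1 l0 l1 r0 r1 \<subseteq> cbox (min (l0 + l1*y0) (l0 + l1*y1), y0) (max (r0 + r1*y0) (r0 + r1*y1), y1)"
  proof
    fix p assume p: "p \<in> trap y0 y1 l0 l1 r0 r1"
    obtain x y where pe: "p = (x, y)" by (cases p)
    have y: "y0 < y" "y < y1" and x: "l0 + l1*y < x" "x < r0 + r1*y" using p by (auto simp: trap_def pe)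
    have "min (l0 + l1*y0) (l0 + l1*y1) \<le> l0 + l1*y"
    proof (cases "l1 \<ge> 0")
      case True then show ?thesis using y mult_left_mono[of y0 y l1] by (auto simp: min_def)
    next
      case False then show ?thesis using y mult_left_mono_neg[of y y1 l1] by (auto simp: min_def)
    qed
    moreover have "r0 + r1*y \<le> max (r0 + r1*y0) (r0 + r1*y1)"
    proof (cases "r1 \<ge> 0")
      case True then show ?thesis using y mult_left_mono[of y y1 r1] by (auto simp: max_def)
    next
      case False then show ?thesis using y mult_left_mono_neg[of y0 y r1] by (auto simp: max_def)
    qed
    ultimately show "p \<in> cbox (min (l0 + l1*y0) (l0 + l1*y1), y0) (max (r0 + r1*y0) (r0 + r1*y1), y1)"
      using x y by (auto simp: pe cbox_Pair_iff)
  qed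
  then show ?thesis
    by (rule fmeasurableI2[OF lmeasurable_cbox _ trap_sets])
qed


definition lin :: "real \<Rightarrow> real \<Rightarrow> real\<times>real \<Rightarrow> real" where
  "lin \<alpha> \<beta> p = \<alpha> * fst p + \<beta> * snd p"

lemma convex_lin_le: "convex {p. lin \<alpha> \<beta> p \<le> \<gamma>}"
proof -
  have "{p. lin \<alpha> \<beta> p \<le> \<gamma>} = {p. (\<alpha>, \<beta>) \<bullet> p \<le> \<gamma>}" by (auto simp: lin_def inner_prod_def)
  then show ?thesis by (simp add: convex_halfspace_le)
qed

lemma negligible_lin: "(\<alpha>, \<beta>) \<noteq> (0, 0) \<Longrightarrow> {p. lin \<alpha> \<beta> p = \<gamma>} \<in> null_sets lebesgue"
proof -
  assume nz: "(\<alpha>, \<beta>) \<noteq> (0, 0)"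
  have "{p. lin \<alpha> \<beta> p = \<gamma>} = {p. (\<alpha>, \<beta>) \<bullet> p = \<gamma>}" by (auto simp: lin_def inner_prod_def)
  moreover have "negligible {p. (\<alpha>, \<beta>) \<bullet> p = \<gamma>}"
    by (rule negligible_hyperplane) (use nz in \<open>simp add: zero_prod_def\<close>)
  ultimately show ?thesis by (simp add: negligible_iff_null_sets)
qed

lemma bary_alg:
  fixes t m k x y D :: real
  assumes D0: "D \<noteq> 0" and k0: "k \<noteq> 0" and DD: "D = m*(k+1)"
  shows "(k*y - k + m)/D + k*(m + 1 - t + (t-1)*y - m*x)/D + k*(m*x + t - t*y)/D = 1"
    "(k*y - k + m)/D * t + k*(m + 1 - t + (t-1)*y - m*x)/D * (-t/k) + k*(m*x + t - t*y)/D * ((k+1-t)/k) = x"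
    "(k*y - k + m)/D * (m+1) + k*(m + 1 - t + (t-1)*y - m*x)/D * ((k-m)/k) + k*(m*x + t - t*y)/D * ((k-m)/k) = y"
proof -
  show "(k*y - k + m)/D + k*(m + 1 - t + (t-1)*y - m*x)/D + k*(m*x + t - t*y)/D = 1"
    using D0 k0 by (simp add: field_simps) (simp add: DD algebra_simps)
  show "(k*y - k + m)/D * t + k*(m + 1 - t + (t-1)*y - m*x)/D * (-t/k) + k*(m*x + t - t*y)/D * ((k+1-t)/k) = x"
    using D0 k0 by (simp add: field_simps) (simp add: DD algebra_simps)
  show "(k*y - k + m)/D * (m+1) + k*(m + 1 - t + (t-1)*y - m*x)/D * ((k-m)/k) + k*(m*x + t - t*y)/D * ((k-m)/k) = y"
    using D0 k0 by (simp add: field_simps) (simp add: DD algebra_simps)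
qed

lemma bary_alg2:
  fixes t B k x y D :: real
  assumes D0: "D \<noteq> 0" and k0: "k \<noteq> 0" and DD: "D = B*(k+1)"
  shows "(B - k*y)/D + k*(B + (1-t)*y - B*x)/D + k*(B*x + t*y)/D = 1"
    "(B - k*y)/D * t + k*(B + (1-t)*y - B*x)/D * (-t/k) + k*(B*x + t*y)/D * ((k+1-t)/k) = x"
    "(B - k*y)/D * (-B) + k*(B + (1-t)*y - B*x)/D * (B/k) + k*(B*x + t*y)/D * (B/k) = y"
proof -
  show "(B - k*y)/D + k*(B + (1-t)*y - B*x)/D + k*(B*x + t*y)/D = 1"
    using D0 k0 by (simp add: field_simps) (simp add: DD algebra_simps)
  show "(B - k*y)/D * t + k*(B + (1-t)*y - B*x)/D * (-t/k) + k*(B*x + t*y)/D * ((k+1-t)/k) = x"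
    using D0 k0 by (simp add: field_simps) (simp add: DD algebra_simps)
  show "(B - k*y)/D * (-B) + k*(B + (1-t)*y - B*x)/D * (B/k) + k*(B*x + t*y)/D * (B/k) = y"
    using D0 k0 by (simp add: field_simps) (simp add: DD algebra_simps)
qed

lemma measure_Un_disj:
  assumes "S \<in> fmeasurable M" "T \<in> fmeasurable M" "S \<inter> T = {}"
  shows "measure M (S \<union> T) = measure M S + measure M T"
  using measure_Un3[OF assms(1,2)] assms(3) by simp

lemma trap_alg_up: "(m::real) \<noteq> 0 \<Longrightarrow> ((a-t)/m - (-t/m))*(a-h) + ((t-1)/m - t/m)*(a^2-h^2)/2 = (a-h)^2/(2*m)"
  by (simp add: field_simps power2_eq_square)

lemma slabpsi_le:
  assumes lo: "c < p1 * fst f + p2 * snd f" and hi: "p1 * fst f + p2 * snd f < c + 1"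
    and u: "p1 * fst r + p2 * snd r \<le> z * (c + 1 - (p1 * fst f + p2 * snd f))"
    and l: "- (p1 * fst r + p2 * snd r) \<le> z * ((p1 * fst f + p2 * snd f) - c)"
  shows "slabpsi p1 p2 c f r \<le> z"
  unfolding slabpsi_def using lo hi u l by (simp add: pos_divide_le_eq)

lemma trap_alg_low: "(b::real) \<noteq> 0 \<Longrightarrow> (1 - 0)*(y-(-b)) + ((1-t)/b - (-t/b))*(y^2-(-b)^2)/2 = (y+b)^2/(2*b)"
  by (simp add: field_simps power2_eq_square)

lemma sq_alg: "(b::real) \<noteq> 0 \<Longrightarrow> c \<noteq> 0 \<Longrightarrow> (b*z/c)^2/(2*b) = b*z^2/(2*c^2)"
  by (simp add: field_simps power2_eq_square)

lemma sq_alg2: "(m::real) \<noteq> 0 \<Longrightarrow> (m*c)^2/(2*m) = m*c^2/2"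
  by (simp add: field_simps power2_eq_square)

lemma final_alg2:
  fixes k c w :: real assumes k: "k > 0" and c: "c > 0" and w: "w = k + 1"
  shows "(w^2/(2*k) - k*(c+1)^2/(2*c^2)) / (w^2/(2*k))
     = ((c+1) - w) * (2*w*(c+1) - w - (c+1)) / (w^2 * c^2)"
proof -
  have w0: "w \<noteq> 0" using k w by simp
  show ?thesis using k c w0 by (simp add: field_simps power2_eq_square) (simp add: w algebra_simps)
qed

lemma final_alg3:
  fixes k c w :: real assumes k: "k > 0" and c: "c > 0" and w: "w = k + 1"
  shows "(w^2/(2*k) - k*(c+1)^2/(2*c^2) + k*(1 - (1/(k*c))^2)/2) / (w^2/(2*k))
     = (((c+1) - w) * (2*w*(c+1) - w - (c+1)) + (w-1)^2*c^2 - 1) / (w^2 * c^2)"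
proof -
  have w0: "w \<noteq> 0" using k w by simp
  show ?thesis using k c w0 by (simp add: field_simps power2_eq_square) (simp add: w algebra_simps)
qed

lemma solve_c:
  fixes t A B :: real and c :: "real \<times> real"
  assumes t0: "0 < t" and A1: "1 < A" and B0: "0 < B"
    and s1: "(0, 0) \<in> open_segment (t, -B) c" and s2: "(0, 1) \<in> open_segment (t, A) c"
  shows "c = (-t/(A+B-1), B/(A+B-1))"
proof -
  obtain c1 c2 where ce: "c = (c1, c2)" by (cases c)
  from s1 obtain u where u: "0 < u" "u < 1" and e: "(0::real, 0::real) = (1 - u) *\<^sub>R (t, -B) + u *\<^sub>R c"
    unfolding in_segment by blast
  from s2 obtain v where v: "0 < v" "v < 1" and f: "(0::real, 1::real) = (1 - v) *\<^sub>R (t, A) + v *\<^sub>R c"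
    unfolding in_segment by blast
  have E1: "u * c1 = -((1-u)*t)" and E2: "u * c2 = (1-u)*B" using e by (auto simp: ce algebra_simps)
  have E3: "v * c1 = -((1-v)*t)" and E4: "1 = (1-v)*A + v * c2" using f by (auto simp: ce algebra_simps)
  have "v * (u * c1) = u * (v * c1)" by simp
  then have "v * ((1-u)*t) = u * ((1-v)*t)" using E1 E3 by simp
  then have "(v - u) * t = 0" by (simp add: algebra_simps)
  then have uv: "v = u" using t0 by simp
  have "1 = (1-u)*A + (1-u)*B" using E4 E2 uv by simp
  then have AB: "(1-u)*(A+B) = 1" by (simp add: algebra_simps)
  have "(1-u)*(A+B) = (A+B) - u*(A+B)" by (simp add: algebra_simps)
  then have k: "u*(A+B) = A+B-1" using AB by linarith
  have kne: "A+B-1 \<noteq> 0" using A1 B0 by simp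
  have "(A+B-1)*c2 = (1-u)*(A+B)*B" using E2 k by (metis mult.assoc mult.commute)
  then have "(A+B-1)*c2 = B" using AB by simp
  then have c2e: "c2 = B/(A+B-1)" using kne by (simp add: field_simps)
  have "(A+B-1)*c1 = -((1-u)*(A+B)*t)" using E1 k by (metis mult.assoc mult.commute mult_minus_right)
  then have "(A+B-1)*c1 = -t" using AB by simp
  then have c1e: "c1 = -t/(A+B-1)" using kne by (simp add: field_simps)
  show ?thesis using c1e c2e ce by simp
qed

lemma solve_d:
  fixes t A B :: real and d :: "real \<times> real"
  assumes t0: "0 < t" and t1: "t < 1" and A1: "1 < A" and B0: "0 < B"
    and s1: "(1, 0) \<in> open_segment (t, -B) d" and s2: "(1, 1) \<in> open_segment (t, A) d"
  shows "d = ((A+B-t)/(A+B-1), B/(A+B-1))"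
proof -
  obtain d1 d2 where de: "d = (d1, d2)" by (cases d)
  from s1 obtain u where u: "0 < u" "u < 1" and e: "(1::real, 0::real) = (1 - u) *\<^sub>R (t, -B) + u *\<^sub>R d"
    unfolding in_segment by blast
  from s2 obtain v where v: "0 < v" "v < 1" and f: "(1::real, 1::real) = (1 - v) *\<^sub>R (t, A) + v *\<^sub>R d"
    unfolding in_segment by blast
  have E1: "u * (d1 - t) = 1 - t" and E2: "u * d2 = (1-u)*B" using e by (auto simp: de algebra_simps)
  have E3: "v * (d1 - t) = 1 - t" and E4: "1 = (1-v)*A + v * d2" using f by (auto simp: de algebra_simps)
  have nz: "d1 - t \<noteq> 0" using E1 t1 by auto
  have "v * (d1 - t) = u * (d1 - t)" using E1 E3 by simp
  then have uv: "v = u" using nz by (simp only: mult_cancel_right) simp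
  have "1 = (1-u)*A + (1-u)*B" using E4 E2 uv by simp
  then have AB: "(1-u)*(A+B) = 1" by (simp add: algebra_simps)
  have "(1-u)*(A+B) = (A+B) - u*(A+B)" by (simp add: algebra_simps)
  then have k: "u*(A+B) = A+B-1" using AB by linarith
  have kne: "A+B-1 \<noteq> 0" using A1 B0 by simp
  have "(A+B-1)*d2 = (1-u)*(A+B)*B" using E2 k by (metis mult.assoc mult.commute)
  then have "(A+B-1)*d2 = B" using AB by simp
  then have d2e: "d2 = B/(A+B-1)" using kne by (simp add: field_simps)
  have "(A+B-1)*(d1 - t) = (1-t)*(A+B)" using E1 k by (metis mult.assoc mult.commute)
  then have "(A+B-1)*d1 = A+B-t" by (simp add: algebra_simps)
  then have d1e: "d1 = (A+B-t)/(A+B-1)" using kne by (simp add: field_simps)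
  show ?thesis using d1e d2e de by simp
qed

locale kite =
  fixes t A B :: real
  assumes t0: "0 < t" and t1: "t < 1" and A1: "1 < A" and B0: "0 < B"
begin

definition "k = A + B - 1"
definition "h = B / k"
definition "va = (t, A)"
definition "vb = (t, -B)"
definition "vc = (-t/k, h)"
definition "vd = (1 + (1-t)/k, h)"

definition "SQ = {p. lin (-(A-1)) t p \<le> t \<and> lin (A-1) (1-t) p \<le> A - t \<and> lin (-B) (-t) p \<le> 0 \<and> lin B (t-1) p \<le> B}"
definition "Qo = {p. lin (-(A-1)) t p < t \<and> lin (A-1) (1-t) p < A - t \<and> lin (-B) (-t) p < 0 \<and> lin B (t-1) p < B}"
definition "Tup = trap h A (-t/(A-1)) (t/(A-1)) ((A-t)/(A-1)) ((t-1)/(A-1))"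
definition "Tlow = trap (-B) h 0 (-t/B) 1 ((1-t)/B)"

lemma k0: "k > 0" using A1 B0 by (simp add: k_def)
lemma h0: "h > 0" using k0 B0 by (simp add: h_def)
lemma h1: "h < 1" using k0 A1 B0 by (simp add: h_def k_def field_simps)

lemma lin_divk: "lin al be (u / k, v / k) \<le> ga \<longleftrightarrow> al * u + be * v \<le> ga * k"
proof -
  have "lin al be (u / k, v / k) = (al * u + be * v) / k" using k0 by (simp add: lin_def field_simps)
  then show ?thesis using k0 by (simp add: pos_divide_le_eq)
qed

lemma vc_eq: "vc = (-t/k, B/k)" by (simp add: vc_def h_def)
lemma vd_eq: "vd = ((k+1-t)/k, B/k)" using k0 by (simp add: vd_def h_def field_simps)

lemma AB: "A + B = k + 1" by (simp add: k_def)

lemma va_SQ: "va \<in> SQ"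
proof -
  have "0 < B*t + t*A" using t0 A1 B0 by (simp add: add_pos_pos)
  moreover have "(t-1)*(A+B) \<le> 0" using t1 A1 B0 by (simp add: mult_nonpos_nonneg)
  ultimately show ?thesis by (simp add: SQ_def va_def lin_def algebra_simps)
qed

lemma vb_SQ: "vb \<in> SQ"
proof -
  have "0 \<le> t*(A+B)" using t0 A1 B0 by simp
  moreover have "0 \<le> (1-t)*B + A*(1-t)" using t1 A1 B0 by simp
  ultimately show ?thesis by (simp add: SQ_def vb_def lin_def algebra_simps)
qed

lemma vc_SQ: "vc \<in> SQ"
proof -
  have 2: "(A-t)*k - (-(A-1)*t + (1-t)*B) = (A-1)*(A+B)" by (simp add: k_def algebra_simps)
  have "0 \<le> (A-1)*(A+B)" using A1 B0 by simp
  moreover have "- B \<le> B * k" using B0 k0 by (smt (verit) mult_pos_pos)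
  moreover have "t*k = (A-1)*t + t*B" by (simp add: k_def algebra_simps)
  ultimately show ?thesis unfolding SQ_def mem_Collect_eq vc_eq lin_divk using 2
    by (simp add: algebra_simps)
qed

lemma vd_SQ: "vd \<in> SQ"
proof -
  have 1: "t*k - (-(A-1)*(k+1-t) + t*B) = (A-1)*(A+B)" by (simp add: k_def algebra_simps)
  have 2: "(A-t)*k - ((A-1)*(k+1-t) + (1-t)*B) = 0" by (simp add: k_def algebra_simps)
  have "0 \<le> (A-1)*(A+B)" using A1 B0 by simp
  moreover have "0 \<le> B * (k+1)" using B0 k0 by simp
  ultimately show ?thesis unfolding SQ_def mem_Collect_eq vd_eq lin_divk using 1 2
    by (simp add: algebra_simps)
qed

lemma SQ_convex: "convex SQ"
proof -
  have "SQ = {p. lin (-(A-1)) t p \<le> t} \<inter> {p. lin (A-1) (1-t) p \<le> A - t} \<inter> {p. lin (-B) (-t) p \<le> 0} \<inter> {p. lin B (t-1) p \<le> B}"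
    by (auto simp: SQ_def)
  then show ?thesis by (simp add: convex_Int convex_lin_le)
qed

definition "Qh = convex hull {va, vb, vc, vd}"

lemma Qh_SQ: "Qh \<subseteq> SQ"
  unfolding Qh_def using SQ_convex va_SQ vb_SQ vc_SQ vd_SQ
  by (intro hull_minimal) auto

lemma Aneq: "A - 1 \<noteq> 0" "A \<noteq> 1" using A1 by auto
lemma Bneq: "B \<noteq> 0" using B0 by auto

lemma c1: "lin (-(A-1)) t p < t \<longleftrightarrow> -t/(A-1) + t/(A-1) * snd p < fst p"
proof -
  have "lin (-(A-1)) t p < t \<longleftrightarrow> t*(snd p - 1) < fst p * (A-1)" by (simp add: lin_def algebra_simps)
  also have "\<dots> \<longleftrightarrow> (t*(snd p - 1))/(A-1) < fst p" using A1 by (simp add: pos_divide_less_eq)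
  also have "(t*(snd p - 1))/(A-1) = -t/(A-1) + t/(A-1) * snd p" by (simp add: right_diff_distrib diff_divide_distrib)
  finally show ?thesis .
qed
lemma c2: "lin (A-1) (1-t) p < A - t \<longleftrightarrow> fst p < (A-t)/(A-1) + (t-1)/(A-1) * snd p"
proof -
  have "lin (A-1) (1-t) p < A - t \<longleftrightarrow> fst p * (A-1) < A - t + (t-1) * snd p" by (simp add: lin_def algebra_simps)
  also have "\<dots> \<longleftrightarrow> fst p < (A - t + (t-1) * snd p)/(A-1)" using A1 by (simp add: pos_less_divide_eq)
  also have "(A - t + (t-1) * snd p)/(A-1) = (A-t)/(A-1) + (t-1)/(A-1) * snd p" by (simp add: add_divide_distrib)
  finally show ?thesis .
qed
lemma c3: "lin (-B) (-t) p < 0 \<longleftrightarrow> 0 + (-t/B) * snd p < fst p"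
proof -
  have "lin (-B) (-t) p < 0 \<longleftrightarrow> (-t) * snd p < fst p * B" unfolding lin_def by (smt (verit) mult.commute mult_minus_left)
  also have "\<dots> \<longleftrightarrow> ((-t) * snd p)/B < fst p" by (rule pos_divide_less_eq[OF B0, symmetric])
  also have "((-t) * snd p)/B = 0 + (-t/B) * snd p" by simp
  finally show ?thesis .
qed
lemma c4: "lin B (t-1) p < B \<longleftrightarrow> fst p < 1 + (1-t)/B * snd p"
proof -
  have "lin B (t-1) p < B \<longleftrightarrow> fst p * B < B + (1-t) * snd p" by (simp add: lin_def algebra_simps)
  also have "\<dots> \<longleftrightarrow> fst p < (B + (1-t) * snd p)/B" using B0 by (simp add: pos_less_divide_eq)
  also have "(B + (1-t) * snd p)/B = 1 + (1-t)/B * snd p" using Bneq by (simp add: field_simps)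
  finally show ?thesis .
qed

lemma Tup_Qo: "Tup \<subseteq> Qo"
proof
  fix p assume p: "p \<in> Tup"
  obtain x y where pe: "p = (x, y)" by (cases p)
  have y: "h < y" "y < A" and x1: "lin (-(A-1)) t p < t" and x2: "lin (A-1) (1-t) p < A - t"
    using p unfolding Tup_def trap_def c1 c2 by (auto simp: pe)
  have ky: "k*y - B > 0" using y k0 by (simp add: h_def field_simps)
  have e1: "(A-1)*x > t*(y-1)" using x1 by (simp add: pe lin_def algebra_simps)
  have e2: "(A-1)*(1-x) > (1-t)*(y-1)" using x2 by (simp add: pe lin_def algebra_simps)
  have "(A-1)*(B*x + t*y) = B*((A-1)*x) + (A-1)*t*y" by (simp add: algebra_simps)
  also have "\<dots> > B*(t*(y-1)) + (A-1)*t*y" using e1 B0 by simp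
  also have "B*(t*(y-1)) + (A-1)*t*y = t*(k*y - B)" by (simp add: k_def algebra_simps)
  finally have "(A-1)*(B*x + t*y) > 0" using ky t0 by (smt (verit) mult_pos_pos)
  then have h3: "B*x + t*y > 0" using A1 by (simp add: zero_less_mult_iff)
  have "(A-1)*(B*(1-x) + (1-t)*y) = B*((A-1)*(1-x)) + (A-1)*(1-t)*y" by (simp add: algebra_simps)
  also have "\<dots> > B*((1-t)*(y-1)) + (A-1)*(1-t)*y" using e2 B0 by simp
  also have "B*((1-t)*(y-1)) + (A-1)*(1-t)*y = (1-t)*(k*y - B)" by (simp add: k_def algebra_simps)
  finally have "(A-1)*(B*(1-x) + (1-t)*y) > 0" using ky t1 by (smt (verit) mult_pos_pos)
  then have h4: "B*(1-x) + (1-t)*y > 0" using A1 by (simp add: zero_less_mult_iff)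
  show "p \<in> Qo" using x1 x2 h3 h4 by (simp add: Qo_def pe lin_def algebra_simps)
qed

lemma Tlow_Qo: "Tlow \<subseteq> Qo"
proof
  fix p assume p: "p \<in> Tlow"
  obtain x y where pe: "p = (x, y)" by (cases p)
  have y: "-B < y" "y < h" and x3: "lin (-B) (-t) p < 0" and x4: "lin B (t-1) p < B"
    using p unfolding Tlow_def trap_def c3 c4 by (auto simp: pe)
  have ky: "B - k*y > 0" using y k0 by (simp add: h_def field_simps)
  have e3: "B*x > -(t*y)" using x3 by (simp add: pe lin_def algebra_simps)
  have e4: "B*(1-x) > -((1-t)*y)" using x4 by (simp add: pe lin_def algebra_simps)
  have "B*((A-1)*x - t*(y-1)) = (A-1)*(B*x) - B*t*(y-1)" by (simp add: algebra_simps)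
  also have "\<dots> > (A-1)*(-(t*y)) - B*t*(y-1)" using mult_strict_left_mono[OF e3, of "A-1"] A1 by simp
  also have "(A-1)*(-(t*y)) - B*t*(y-1) = t*(B - k*y)" by (simp add: k_def algebra_simps)
  finally have "B*((A-1)*x - t*(y-1)) > 0" using ky t0 by (smt (verit) mult_pos_pos)
  then have h1: "(A-1)*x - t*(y-1) > 0" using B0 by (simp add: zero_less_mult_iff)
  have "B*((A-1)*(1-x) - (1-t)*(y-1)) = (A-1)*(B*(1-x)) - B*(1-t)*(y-1)" by (simp add: algebra_simps)
  also have "\<dots> > (A-1)*(-((1-t)*y)) - B*(1-t)*(y-1)" using mult_strict_left_mono[OF e4, of "A-1"] A1 by simp
  also have "(A-1)*(-((1-t)*y)) - B*(1-t)*(y-1) = (1-t)*(B - k*y)" by (simp add: k_def algebra_simps)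
  finally have "B*((A-1)*(1-x) - (1-t)*(y-1)) > 0" using ky t1 by (smt (verit) mult_pos_pos)
  then have h2: "(A-1)*(1-x) - (1-t)*(y-1) > 0" using B0 by (simp add: zero_less_mult_iff)
  show "p \<in> Qo" using x3 x4 h1 h2 by (simp add: Qo_def pe lin_def algebra_simps)
qed

lemma Qo_yA: "p \<in> Qo \<Longrightarrow> snd p < A"
  using A1 by (auto simp: Qo_def lin_def algebra_simps)
lemma Qo_yB: "p \<in> Qo \<Longrightarrow> -B < snd p"
  using B0 by (auto simp: Qo_def lin_def algebra_simps)

lemma Qo_below: "Qo \<inter> {p. snd p < y0} \<subseteq> trap (-B) y0 0 (-t/B) 1 ((1-t)/B)"
proof
  fix p assume p: "p \<in> Qo \<inter> {p. snd p < y0}"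
  then have "lin (-B) (-t) p < 0" "lin B (t-1) p < B" "-B < snd p" "snd p < y0"
    using Qo_yB by (auto simp: Qo_def)
  then show "p \<in> trap (-B) y0 0 (-t/B) 1 ((1-t)/B)"
    unfolding trap_def mem_Collect_eq c3 c4 by blast
qed
lemma Qo_above: "Qo \<inter> {p. y1 < snd p} \<subseteq> trap y1 A (-t/(A-1)) (t/(A-1)) ((A-t)/(A-1)) ((t-1)/(A-1))"
proof
  fix p assume p: "p \<in> Qo \<inter> {p. y1 < snd p}"
  then have "lin (-(A-1)) t p < t" "lin (A-1) (1-t) p < A - t" "snd p < A" "y1 < snd p"
    using Qo_yA by (auto simp: Qo_def)
  then show "p \<in> trap y1 A (-t/(A-1)) (t/(A-1)) ((A-t)/(A-1)) ((t-1)/(A-1))"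
    unfolding trap_def mem_Collect_eq c1 c2 by blast
qed

definition "Nl = {p. lin (-(A-1)) t p = t} \<union> {p. lin (A-1) (1-t) p = A - t} \<union> {p. lin (-B) (-t) p = 0}
   \<union> {p. lin B (t-1) p = B} \<union> {p. lin 0 1 p = h}"

lemma Nl_null: "Nl \<in> null_sets lebesgue"
  unfolding Nl_def using A1 B0 t0
  by (intro null_sets.Un negligible_lin) auto

lemma SQ_cover: "SQ \<subseteq> Tup \<union> Tlow \<union> Nl"
proof
  fix p assume p: "p \<in> SQ"
  show "p \<in> Tup \<union> Tlow \<union> Nl"
  proof (cases "p \<in> Nl")
    case False
    then have "p \<in> Qo" and yh: "snd p \<noteq> h" using p by (auto simp: SQ_def Qo_def Nl_def lin_def)
    then have f: "lin (-(A-1)) t p < t" "lin (A-1) (1-t) p < A - t" "lin (-B) (-t) p < 0" "lin B (t-1) p < B"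
      "snd p < A" "-B < snd p"
      using Qo_yA Qo_yB by (auto simp: Qo_def)
    show ?thesis
    proof (cases "snd p > h")
      case True
      then have "p \<in> Tup" using f unfolding Tup_def trap_def mem_Collect_eq c1 c2 by blast
      then show ?thesis by simp
    next
      case False
      then have "p \<in> Tlow" using f yh unfolding Tlow_def trap_def mem_Collect_eq c3 c4 by auto
      then show ?thesis by simp
    qed
  qed simp
qed

lemma Beq: "B = k + 1 - A" by (simp add: k_def)

lemma Tup_Qh: "Tup \<subseteq> Qh"
proof
  fix p assume p: "p \<in> Tup"
  obtain x y where pe: "p = (x, y)" by (cases p)
  have y: "h < y" "y < A" and l1: "lin (-(A-1)) t p < t" and l2: "lin (A-1) (1-t) p < A - t"
    using p unfolding Tup_def trap_def mem_Collect_eq c1[symmetric] c2[symmetric] by (auto simp: pe)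
  define m where "m = A - 1"
  define D where "D = m*(k+1)"
  have m0: "m > 0" using A1 by (simp add: m_def)
  have D0: "D > 0" using m0 k0 by (simp add: D_def)
  have Am: "m + 1 = A" and Bk: "k - m = B" and yB: "k*y - k + m = k*y - B" by (simp_all add: m_def k_def)
  define al where "al = (k*y - B)/D"
  define be where "be = k*(A - t + (t-1)*y - m*x)/D"
  define ga where "ga = k*(m*x + t - t*y)/D"
  have "k*y - B > 0" using y k0 by (simp add: h_def field_simps)
  then have al0: "al \<ge> 0" using D0 by (simp add: al_def)
  have "m*x + t - t*y > 0" using l1 by (simp add: pe lin_def m_def algebra_simps)
  then have ga0: "ga \<ge> 0" using D0 k0 by (simp add: ga_def)
  have "A - t + (t-1)*y - m*x > 0" using l2 by (simp add: pe lin_def m_def algebra_simps)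
  then have be0: "be \<ge> 0" using D0 k0 by (simp add: be_def)
  note alg = bary_alg[of D k m y t x, OF _ _ D_def, unfolded Am Bk yB]
  have sum: "al + be + ga = 1" using alg(1) D0 k0 by (simp add: al_def be_def ga_def)
  have comp1: "al * t + be * (-t/k) + ga * ((k+1-t)/k) = x" using alg(2) D0 k0 by (simp add: al_def be_def ga_def)
  have comp2: "al * A + be * (B/k) + ga * (B/k) = y" using alg(3) D0 k0 by (simp add: al_def be_def ga_def)
  have "p = al *\<^sub>R va + be *\<^sub>R vc + ga *\<^sub>R vd"
    using comp1 comp2 by (simp add: pe va_def vc_eq vd_eq)
  then have "p \<in> convex hull {va, vc, vd}"
    unfolding convex_hull_3 using al0 be0 ga0 sum by blast
  also have "\<dots> \<subseteq> Qh" unfolding Qh_def by (rule hull_mono) auto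
  finally show "p \<in> Qh" .
qed

lemma Tlow_Qh: "Tlow \<subseteq> Qh"
proof
  fix p assume p: "p \<in> Tlow"
  obtain x y where pe: "p = (x, y)" by (cases p)
  have y: "-B < y" "y < h" and l3: "lin (-B) (-t) p < 0" and l4: "lin B (t-1) p < B"
    using p unfolding Tlow_def trap_def mem_Collect_eq c3[symmetric] c4[symmetric] by (auto simp: pe)
  define D where "D = B*(k+1)"
  have D0: "D > 0" using B0 k0 by (simp add: D_def)
  define al where "al = (B - k*y)/D"
  define be where "be = k*(B + (1-t)*y - B*x)/D"
  define ga where "ga = k*(B*x + t*y)/D"
  have "B - k*y > 0" using y k0 by (simp add: h_def field_simps)
  then have al0: "al \<ge> 0" using D0 by (simp add: al_def)
  have "B*x + t*y > 0" using l3 by (simp add: pe lin_def algebra_simps)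
  then have ga0: "ga \<ge> 0" using D0 k0 by (simp add: ga_def)
  have "B + (1-t)*y - B*x > 0" using l4 by (simp add: pe lin_def algebra_simps)
  then have be0: "be \<ge> 0" using D0 k0 by (simp add: be_def)
  note alg = bary_alg2[of D k B y t x, OF _ _ D_def]
  have sum: "al + be + ga = 1" using alg(1) D0 k0 by (simp add: al_def be_def ga_def)
  have comp1: "al * t + be * (-t/k) + ga * ((k+1-t)/k) = x" using alg(2) D0 k0 by (simp add: al_def be_def ga_def)
  have comp2: "al * (-B) + be * (B/k) + ga * (B/k) = y" using alg(3) D0 k0 by (simp add: al_def be_def ga_def)
  have "p = al *\<^sub>R vb + be *\<^sub>R vc + ga *\<^sub>R vd"
    using comp1 comp2 by (simp add: pe vb_def vc_eq vd_eq)
  then have "p \<in> convex hull {vb, vc, vd}"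
    unfolding convex_hull_3 using al0 be0 ga0 sum by blast
  also have "\<dots> \<subseteq> Qh" unfolding Qh_def by (rule hull_mono) auto
  finally show "p \<in> Qh" .
qed

lemma hA: "h < A" using h1 A1 by simp

lemma Lup_le: "y \<le> A \<Longrightarrow> -t/(A-1) + t/(A-1)*y \<le> (A-t)/(A-1) + (t-1)/(A-1)*y"
proof -
  assume y: "y \<le> A"
  have eq1: "-t/(A-1) + t/(A-1)*y = (t*(y-1))/(A-1)" by (simp add: right_diff_distrib diff_divide_distrib)
  have eq2: "(A-t)/(A-1) + (t-1)/(A-1)*y = (A - t + (t-1)*y)/(A-1)" by (simp add: add_divide_distrib)
  have "t*(y-1) \<le> A - t + (t-1)*y" using y by (simp add: algebra_simps)
  then show ?thesis unfolding eq1 eq2 using A1 by (intro divide_right_mono) auto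
qed

lemma Tup_fm: "Tup \<in> fmeasurable lebesgue"
  unfolding Tup_def
proof (rule trap_fmeas)
  show "h \<le> A" using hA by simp
  fix y assume "h \<le> y" "y \<le> A"
  then show "-t/(A-1) + t/(A-1)*y \<le> (A-t)/(A-1) + (t-1)/(A-1)*y" by (intro Lup_le) simp
qed

lemma Tlow_fm: "Tlow \<in> fmeasurable lebesgue"
  unfolding Tlow_def
proof (rule trap_fmeas)
  show "-B \<le> h" using h0 B0 by simp
  fix y assume "-B \<le> y" "y \<le> h"
  then have "-t*y \<le> B + (1-t)*y" by (simp add: algebra_simps)
  then show "0 + (-t/B)*y \<le> 1 + (1-t)/B*y"
    using B0 by (simp add: field_simps)
qed

lemma mTup: "measure lebesgue Tup = (A-h)^2/(2*(A-1))"
proof -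
  have "measure lebesgue Tup = ((A-t)/(A-1) - (-t/(A-1)))*(A-h) + ((t-1)/(A-1) - t/(A-1))*(A^2-h^2)/2"
    unfolding Tup_def
  proof (rule trap_measure)
    show "h \<le> A" using hA by simp
    fix y assume "h \<le> y" "y \<le> A"
    then show "-t/(A-1) + t/(A-1)*y \<le> (A-t)/(A-1) + (t-1)/(A-1)*y" by (intro Lup_le) simp
  qed
  also have "\<dots> = (A-h)^2/(2*(A-1))" by (rule trap_alg_up[OF Aneq(1)])
  finally show ?thesis .
qed

lemma mTlow: "measure lebesgue Tlow = (h+B)^2/(2*B)"
proof -
  have "measure lebesgue Tlow = (1 - 0)*(h-(-B)) + ((1-t)/B - (-t/B))*(h^2-(-B)^2)/2"
    unfolding Tlow_def
  proof (rule trap_measure)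
    show "-B \<le> h" using h0 B0 by simp
    fix y assume "-B \<le> y" "y \<le> h"
    then have "-t*y \<le> B + (1-t)*y" by (simp add: algebra_simps)
    then show "0 + (-t/B)*y \<le> 1 + (1-t)/B*y"
      using B0 by (simp add: field_simps)
  qed
  also have "\<dots> = (h+B)^2/(2*B)" using Bneq by (simp add: field_simps power2_eq_square)
  finally show ?thesis .
qed

lemma Area_eq: "(A-h)^2/(2*(A-1)) + (h+B)^2/(2*B) = (k+1)^2/(2*k)"
proof -
  have e1: "A - h = (A-1)*(k+1)/k" using k0 by (simp add: h_def k_def field_simps)
  have e2: "h + B = B*(k+1)/k" using k0 by (simp add: h_def field_simps)
  have "(A-h)^2/(2*(A-1)) + (h+B)^2/(2*B) = (A-1)*(k+1)^2/(2*k^2) + B*(k+1)^2/(2*k^2)"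
    unfolding e1 e2 using Aneq Bneq k0 by (simp add: field_simps power2_eq_square)
  also have "\<dots> = (A - 1 + B)*((k+1)^2/(2*k^2))" by (simp only: times_divide_eq_right[symmetric] distrib_right[symmetric])
  also have "A - 1 + B = k" by (simp add: k_def)
  finally show ?thesis using k0 by (simp add: power2_eq_square)
qed

lemma Tup_Tlow_disj: "Tup \<inter> Tlow = {}"
  by (auto simp: Tup_def Tlow_def trap_def)

lemma Qh_lmeas: "Qh \<in> lmeasurable"
  unfolding Qh_def by (intro lmeasurable_compact compact_convex_hull) auto

lemma mQh: "measure lebesgue Qh = (k+1)^2/(2*k)"
proof (rule antisym)
  have fm: "Tup \<union> Tlow \<in> fmeasurable lebesgue" using Tup_fm Tlow_fm by auto
  have Nf: "Nl \<in> fmeasurable lebesgue" using Nl_null by (auto simp: fmeasurable_def null_sets_def)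
  have "measure lebesgue Qh \<le> measure lebesgue (Tup \<union> Tlow \<union> Nl)"
    apply (rule measure_mono_fmeasurable)
    using Qh_SQ SQ_cover apply blast
    using Qh_lmeas apply blast
    using fm Nf by auto
  also have "\<dots> = measure lebesgue (Tup \<union> Tlow)"
    using fm Nl_null by (simp add: measure_Un_null_set)
  also have "\<dots> = measure lebesgue Tup + measure lebesgue Tlow"
    by (rule measure_Un_disj[OF Tup_fm Tlow_fm Tup_Tlow_disj])
  finally show "measure lebesgue Qh \<le> (k+1)^2/(2*k)" using mTup mTlow Area_eq by simp
  have "measure lebesgue (Tup \<union> Tlow) \<le> measure lebesgue Qh"
    apply (rule measure_mono_fmeasurable)
    using Tup_Qh Tlow_Qh apply blast
    using fm apply blast
    using Qh_lmeas by blast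
  then show "(k+1)^2/(2*k) \<le> measure lebesgue Qh"
    using measure_Un_disj[OF Tup_fm Tlow_fm Tup_Tlow_disj] mTup mTlow Area_eq by simp
qed

definition "V = quad_vertices va vb vc vd"

lemma V_range: "V j \<in> {va, vb, vc, vd}"
  by (auto simp: V_def quad_vertices_def)

definition "E' z = {f \<in> interior Qh. \<forall>s \<in> cut_closure (splits_at f) f (\<lambda>j. V j - f). 1/z \<le> (\<Sum>j\<in>UNIV. s $ j)}"

lemma E_split:
  assumes f: "f \<in> interior Qh" and z: "z > 0" and cp: "coprime aa ab"
    and lo: "of_int bb < of_int aa * fst f + of_int ab * snd f"
    and hi: "of_int aa * fst f + of_int ab * snd f < of_int bb + 1"
    and le: "\<And>v. v \<in> {va, vb, vc, vd} \<Longrightarrow> slabpsi (of_int aa) (of_int ab) (of_int bb) f (v - f) \<le> z"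
  shows "f \<in> E' z"
  unfolding E'_def
proof (intro CollectI conjI f ballI)
  fix s assume s: "s \<in> cut_closure (splits_at f) f (\<lambda>j. V j - f)"
  then have s0: "\<forall>j. 0 \<le> s $ j" using cp lo hi unfolding cut_splits_char by blast
  have "1 \<le> (\<Sum>j\<in>UNIV. slabpsi (of_int aa) (of_int ab) (of_int bb) f (V j - f) * s $ j)"
    using s cp lo hi unfolding cut_splits_char by blast
  also have "\<dots> \<le> (\<Sum>j\<in>UNIV. z * s $ j)"
    by (intro sum_mono mult_right_mono le V_range) (use s0 in auto)
  also have "\<dots> = z * (\<Sum>j\<in>UNIV. s $ j)" by (simp add: sum_distrib_left)
  finally show "1/z \<le> (\<Sum>j\<in>UNIV. s $ j)" using z by (simp add: field_simps)
qed

lemma vc_snd: "snd vc = h" and vd_snd: "snd vd = h" by (simp_all add: vc_def vd_def)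

lemma horiz_ok:
  assumes f: "f \<in> interior Qh" and z: "z > 1"
    and y0: "B/(z-1) \<le> snd f" and y1: "snd f \<le> (z-A)/(z-1)"
  shows "f \<in> E' z"
proof -
  have fy0: "snd f > 0" using y0 B0 z by (smt (verit) divide_pos_pos)
  have "(z-A)/(z-1) < 1" using z A1 by (simp add: divide_less_eq)
  then have fy1: "snd f < 1" using y1 by simp
  have yl: "B \<le> (z-1) * snd f" using y0 z by (simp add: pos_divide_le_eq mult.commute)
  have yu: "(z-1) * snd f \<le> z - A" using y1 z by (simp add: pos_le_divide_eq mult.commute)
  show ?thesis
  proof (rule E_split[where aa=0 and ab=1 and bb=0, OF f])
    show "z > 0" "coprime (0::int) 1" using z by auto
    show "real_of_int 0 < real_of_int 0 * fst f + real_of_int 1 * snd f" using fy0 by simp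
    show "real_of_int 0 * fst f + real_of_int 1 * snd f < real_of_int 0 + 1" using fy1 by simp
    fix v assume v: "v \<in> {va, vb, vc, vd}"
    have "snd v - snd f \<le> z * (1 - snd f) \<and> snd f - snd v \<le> z * snd f"
    proof -
      have zf: "snd f \<le> z * snd f" using fy0 z by simp
      have zf1: "1 - snd f \<le> z * (1 - snd f)" using fy1 z by simp
      consider "v = va" | "v = vb" | "v = vc" | "v = vd" using v by blast
      then show ?thesis
      proof cases
        case 1
        have a: "0 \<le> z * snd f" using z fy0 by simp
        have b: "A - snd f \<le> z * (1 - snd f)" using yu by (simp add: algebra_simps)
        show ?thesis unfolding 1 va_def snd_conv using a b A1 fy1 by linarith
      next
        case 2 then show ?thesis using yl zf1 B0 fy1 by (simp add: vb_def algebra_simps)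
      next
        case 3 then show ?thesis using zf zf1 h0 h1 by (simp add: vc_snd)
      next
        case 4 then show ?thesis using zf zf1 h0 h1 by (simp add: vd_snd)
      qed
    qed
    then show "slabpsi (real_of_int 0) (real_of_int 1) (real_of_int 0) f (v - f) \<le> z"
      using fy0 fy1 by (intro slabpsi_le) auto
  qed
qed

lemma vert_ok:
  assumes f: "f \<in> interior Qh" and z: "z > 1"
    and x0: "t/(k*(z-1)) \<le> fst f" and x1: "fst f \<le> 1 - (1-t)/(k*(z-1))"
  shows "f \<in> E' z"
proof -
  have kz: "k*(z-1) > 0" using k0 z by simp
  have fx0: "fst f > 0" using x0 t0 kz by (smt (verit) divide_pos_pos)
  have "(1-t)/(k*(z-1)) > 0" using t1 kz by simp
  then have fx1: "fst f < 1" using x1 by simp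
  have xl: "t \<le> k*(z-1) * fst f" using x0 kz by (simp add: pos_divide_le_eq mult.commute)
  have xu: "k*(z-1) * fst f \<le> k*(z-1) - (1-t)"
  proof -
    have "(1-t)/(k*(z-1)) \<le> 1 - fst f" using x1 by simp
    then have "1-t \<le> (1 - fst f) * (k*(z-1))" using kz by (simp add: pos_divide_le_eq)
    then show ?thesis by (simp add: algebra_simps)
  qed
  show ?thesis
  proof (rule E_split[where aa=1 and ab=0 and bb=0, OF f])
    show "z > 0" "coprime (1::int) 0" using z by auto
    show "real_of_int 0 < real_of_int 1 * fst f + real_of_int 0 * snd f" using fx0 by simp
    show "real_of_int 1 * fst f + real_of_int 0 * snd f < real_of_int 0 + 1" using fx1 by simp
    fix v assume v: "v \<in> {va, vb, vc, vd}"
    have "fst v - fst f \<le> z * (1 - fst f) \<and> fst f - fst v \<le> z * fst f"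
    proof -
      have zf: "fst f \<le> z * fst f" using fx0 z by simp
      have zf1: "1 - fst f \<le> z * (1 - fst f)" using fx1 z by simp
      consider "v = va" | "v = vb" | "v = vc" | "v = vd" using v by blast
      then show ?thesis
      proof cases
        case 1 then show ?thesis using zf zf1 t0 t1 by (simp add: va_def)
      next
        case 2 then show ?thesis using zf zf1 t0 t1 by (simp add: vb_def)
      next
        case 3
        have "t \<le> ((z-1) * fst f) * k" using xl by (simp add: algebra_simps)
        then have "t/k \<le> (z-1) * fst f" by (simp add: pos_divide_le_eq[OF k0])
        moreover have "t/k > 0" using t0 k0 by simp
        ultimately show ?thesis using 3 zf1 fx1 by (simp add: vc_def algebra_simps)
      next
        case 4
        have "(z-1) * fst f \<le> (z-1) - (1-t)/k"
        proof -
          have "1-t \<le> ((z-1) - (z-1) * fst f) * k" using xu by (simp add: algebra_simps)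
          then have "(1-t)/k \<le> (z-1) - (z-1) * fst f" by (simp add: pos_divide_le_eq[OF k0])
          then show ?thesis by simp
        qed
        moreover have "(1-t)/k > 0" using t1 k0 by simp
        moreover have "0 \<le> z * fst f" using z fx0 by simp
        ultimately show ?thesis unfolding 4 vd_def fst_conv using fx1 by (simp add: algebra_simps)
      qed
    qed
    then show "slabpsi (real_of_int 1) (real_of_int 0) (real_of_int 0) f (v - f) \<le> z"
      using fx0 fx1 by (intro slabpsi_le) auto
  qed
qed

definition "LTr y = trap (-B) y 0 (-t/B) 1 ((1-t)/B)"
definition "UTr y = trap y A (-t/(A-1)) (t/(A-1)) ((A-t)/(A-1)) ((t-1)/(A-1))"

lemma LT_width: "-B \<le> y \<Longrightarrow> 0 + (-t/B)*y \<le> 1 + (1-t)/B*y"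
proof -
  assume "-B \<le> y"
  then have "-t*y \<le> B + (1-t)*y" by (simp add: algebra_simps)
  then show ?thesis using B0 by (simp add: field_simps)
qed

lemma LT_fm: assumes "-B \<le> y" shows "LTr y \<in> fmeasurable lebesgue"
  unfolding LTr_def
proof (rule trap_fmeas)
  show "-B \<le> y" by fact
  fix u assume "-B \<le> u" "u \<le> y" then show "0 + (-t/B)*u \<le> 1 + (1-t)/B*u" using LT_width by blast
qed
lemma UT_fm: assumes "y \<le> A" shows "UTr y \<in> fmeasurable lebesgue"
  unfolding UTr_def
proof (rule trap_fmeas)
  show "y \<le> A" by fact
  fix u assume "y \<le> u" "u \<le> A" then show "-t/(A-1) + t/(A-1)*u \<le> (A-t)/(A-1) + (t-1)/(A-1)*u" using Lup_le by blast
qed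

lemma mLT: assumes "-B \<le> y" shows "measure lebesgue (LTr y) = (y+B)^2/(2*B)"
proof -
  have "measure lebesgue (LTr y) = (1 - 0)*(y-(-B)) + ((1-t)/B - (-t/B))*(y^2-(-B)^2)/2"
    unfolding LTr_def
  proof (rule trap_measure)
    show "-B \<le> y" by fact
    fix u assume "-B \<le> u" "u \<le> y" then show "0 + (-t/B)*u \<le> 1 + (1-t)/B*u" using LT_width by blast
  qed
  also have "\<dots> = (y+B)^2/(2*B)" by (rule trap_alg_low[OF Bneq])
  finally show ?thesis .
qed
lemma mUT: assumes "y \<le> A" shows "measure lebesgue (UTr y) = (A-y)^2/(2*(A-1))"
proof -
  have "measure lebesgue (UTr y) = ((A-t)/(A-1) - (-t/(A-1)))*(A-y) + ((t-1)/(A-1) - t/(A-1))*(A^2-y^2)/2"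
    unfolding UTr_def
  proof (rule trap_measure)
    show "y \<le> A" by fact
    fix u assume "y \<le> u" "u \<le> A" then show "-t/(A-1) + t/(A-1)*u \<le> (A-t)/(A-1) + (t-1)/(A-1)*u" using Lup_le by blast
  qed
  also have "\<dots> = (A-y)^2/(2*(A-1))" by (rule trap_alg_up[OF Aneq(1)])
  finally show ?thesis .
qed

lemma Tup_UT: "Tup = UTr h" by (simp add: Tup_def UTr_def)
lemma Tlow_LT: "Tlow = LTr h" by (simp add: Tlow_def LTr_def)

lemma UT_mono: "h \<le> y \<Longrightarrow> UTr y \<subseteq> Tup"
  by (auto simp: UTr_def Tup_def trap_def)
lemma LT_mono: "y \<le> h \<Longrightarrow> LTr y \<subseteq> Tlow"
  by (auto simp: LTr_def Tlow_def trap_def)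

lemma TT_int: "Tup \<union> Tlow \<subseteq> interior Qh"
  using Tup_Qh Tlow_Qh by (intro interior_maximal) (auto simp: Tup_def Tlow_def intro: open_Un trap_open)

lemma TT_fm: "Tup \<union> Tlow \<in> fmeasurable lebesgue" using Tup_fm Tlow_fm by auto

lemma line_null: "{p::real\<times>real. snd p = c} \<in> null_sets lebesgue"
proof -
  have "{p::real\<times>real. snd p = c} = {p. lin 0 1 p = c}" by (auto simp: lin_def)
  then show ?thesis using negligible_lin[of 0 1 c] by simp
qed

definition "RH z = (Tup \<union> Tlow) \<inter> {p. B/(z-1) < snd p \<and> snd p < (z-A)/(z-1)}"

lemma RH_sets: "RH z \<in> sets lebesgue"
proof -
  have "open (RH z)" unfolding RH_def Tup_def Tlow_def
    by (intro open_Int open_Un trap_open open_Collect_conj open_Collect_less continuous_intros)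
  then show ?thesis by (intro sets_completionI_sets) (auto intro: borel_open)
qed

lemma RH_fm: "RH z \<in> fmeasurable lebesgue"
  by (rule fmeasurableI2[OF TT_fm _ RH_sets]) (auto simp: RH_def)

lemma RH_E: "z > 1 \<Longrightarrow> RH z \<subseteq> E' z"
  using TT_int by (auto simp: RH_def intro!: horiz_ok)

lemma RH_measure:
  assumes z: "z > k + 1"
  shows "measure lebesgue (RH z) \<ge> (k+1)^2/(2*k) - k*z^2/(2*(z-1)^2)"
proof -
  define y0 where "y0 = B/(z-1)"
  define y1 where "y1 = (z-A)/(z-1)"
  have z1: "z > 1" using z k0 by simp
  have y0B: "-B \<le> y0" using B0 z1 by (smt (verit) y0_def divide_pos_pos)
  have y1A: "y1 \<le> A"
  proof -
    have "z - A \<le> A * (z-1)" using A1 z1 by (simp add: algebra_simps)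
    then show ?thesis using z1 by (simp add: y1_def pos_divide_le_eq)
  qed
  have cover: "Tup \<union> Tlow \<subseteq> RH z \<union> LTr y0 \<union> UTr y1 \<union> ({p. snd p = y0} \<union> {p. snd p = y1})"
  proof
    fix p assume p: "p \<in> Tup \<union> Tlow"
    then have pQ: "p \<in> Qo" using Tup_Qo Tlow_Qo by blast
    consider "snd p < y0" | "snd p = y0" | "y0 < snd p \<and> snd p < y1" | "snd p = y1" | "snd p > y1" by linarith
    then show "p \<in> RH z \<union> LTr y0 \<union> UTr y1 \<union> ({p. snd p = y0} \<union> {p. snd p = y1})"
    proof cases
      case 1 then show ?thesis using Qo_below[of y0] pQ by (auto simp: LTr_def)
    next
      case 3 then show ?thesis using p by (auto simp: RH_def y0_def y1_def)
    next
      case 5 then show ?thesis using Qo_above[of y1] pQ by (auto simp: UTr_def)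
    qed auto
  qed
  have fmU: "RH z \<union> LTr y0 \<union> UTr y1 \<in> fmeasurable lebesgue"
    using RH_fm LT_fm[OF y0B] UT_fm[OF y1A] by auto
  have nl: "{p::real\<times>real. snd p = y0} \<union> {p. snd p = y1} \<in> null_sets lebesgue"
    using line_null by auto
  then have fmN: "{p::real\<times>real. snd p = y0} \<union> {p. snd p = y1} \<in> fmeasurable lebesgue"
    by (auto simp: fmeasurable_def null_sets_def)
  have "measure lebesgue (Tup \<union> Tlow) \<le> measure lebesgue (RH z \<union> LTr y0 \<union> UTr y1 \<union> ({p. snd p = y0} \<union> {p. snd p = y1}))"
    by (rule measure_mono_fmeasurable[OF cover]) (use TT_fm fmU fmN in auto)
  also have "\<dots> = measure lebesgue (RH z \<union> LTr y0 \<union> UTr y1)"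
    using fmU nl by (simp add: measure_Un_null_set)
  also have "\<dots> \<le> measure lebesgue (RH z \<union> LTr y0) + measure lebesgue (UTr y1)"
    by (rule measure_Un_le) (use RH_sets LT_fm[OF y0B] UT_fm[OF y1A] in auto)
  also have "\<dots> \<le> measure lebesgue (RH z) + measure lebesgue (LTr y0) + measure lebesgue (UTr y1)"
    using measure_Un_le[of "RH z" lebesgue "LTr y0"] RH_sets LT_fm[OF y0B] by auto
  finally have ineq: "measure lebesgue (Tup \<union> Tlow) \<le> measure lebesgue (RH z) + (y0+B)^2/(2*B) + (A-y1)^2/(2*(A-1))"
    using mLT[OF y0B] mUT[OF y1A] by simp
  have TT: "measure lebesgue (Tup \<union> Tlow) = (k+1)^2/(2*k)"
    using measure_Un_disj[OF Tup_fm Tlow_fm Tup_Tlow_disj] mTup mTlow Area_eq by simp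
  have e0: "y0 + B = B*z/(z-1)" using z1 by (simp add: y0_def field_simps)
  have e1: "A - y1 = (A-1)*z/(z-1)" using z1 by (simp add: y1_def field_simps)
  have "(y0+B)^2/(2*B) + (A-y1)^2/(2*(A-1)) = B*z^2/(2*(z-1)^2) + (A-1)*z^2/(2*(z-1)^2)"
    unfolding e0 e1 using sq_alg[OF Bneq, of "z-1" z] sq_alg[OF Aneq(1), of "z-1" z] z1 by simp
  also have "\<dots> = (B + (A-1))*(z^2/(2*(z-1)^2))"
    by (simp only: times_divide_eq_right[symmetric] distrib_right[symmetric])
  also have "B + (A-1) = k" by (simp add: k_def)
  finally have "(y0+B)^2/(2*B) + (A-y1)^2/(2*(A-1)) = k*z^2/(2*(z-1)^2)" by simp
  then show ?thesis using ineq TT by simp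
qed

definition "kp z = 1/(k*(z-1))"
definition "P1 z = trap 1 (1 + kp z*(A-1)) (t*kp z) 0 (1 - (1-t)*kp z) 0"
definition "P2 z = UTr (1 + kp z*(A-1))"
definition "P3 z = trap (-(kp z*B)) 0 (t*kp z) 0 (1 - (1-t)*kp z) 0"
definition "P4 z = LTr (-(kp z*B))"

lemma vert_ok': "f \<in> interior Qh \<Longrightarrow> z > 1 \<Longrightarrow> t * kp z \<le> fst f \<Longrightarrow> fst f \<le> 1 - (1-t) * kp z \<Longrightarrow> f \<in> E' z"
  by (rule vert_ok) (auto simp: kp_def)

context
  fixes z assumes z1: "z > 1" and kp1: "kp z < 1"
begin

lemma kp0: "kp z > 0" using k0 z1 by (simp add: kp_def)

lemma P1_sub: "P1 z \<subseteq> E' z"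
proof
  fix p assume p: "p \<in> P1 z"
  obtain x y where pe: "p = (x, y)" by (cases p)
  have y: "1 < y" "y < 1 + kp z*(A-1)" and x: "t * kp z < x" "x < 1 - (1-t) * kp z"
    using p by (auto simp: P1_def trap_def pe)
  have Am: "A - 1 > 0" using A1 by simp
  have yk: "y - 1 < kp z * (A-1)" using y by simp
  have "t*(y-1) < t*(kp z*(A-1))" using yk t0 by simp
  also have "t*(kp z*(A-1)) = (A-1)*(t * kp z)" by simp
  also have "\<dots> < (A-1)*x" using x(1) Am by simp
  finally have l1: "lin (-(A-1)) t p < t" by (simp add: pe lin_def algebra_simps)
  have "(1-t)*(y-1) < (1-t)*(kp z*(A-1))" using yk t1 by simp
  also have "(1-t)*(kp z*(A-1)) = (A-1)*((1-t) * kp z)" by simp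
  also have "\<dots> < (A-1)*(1-x)" using x(2) Am by simp
  finally have l2: "lin (A-1) (1-t) p < A - t" by (simp add: pe lin_def algebra_simps)
  have "kp z * (A-1) < A - 1" using kp1 Am by simp
  then have yA: "y < A" using y by simp
  have "h < y" using h1 y by simp
  then have "p \<in> Tup" using yA l1 l2 unfolding Tup_def trap_def mem_Collect_eq c1[symmetric] c2[symmetric] by (simp add: pe)
  then have "p \<in> interior Qh" using TT_int by blast
  then show "p \<in> E' z" using x z1 by (intro vert_ok') (auto simp: pe)
qed

lemma P2_sub: "P2 z \<subseteq> E' z"
proof
  fix p assume p: "p \<in> P2 z"
  obtain x y where pe: "p = (x, y)" by (cases p)
  have y: "1 + kp z*(A-1) < y" "y < A" using p by (auto simp: P2_def UTr_def trap_def pe)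
  have l: "lin (-(A-1)) t p < t" "lin (A-1) (1-t) p < A - t"
    using p unfolding P2_def UTr_def trap_def mem_Collect_eq c1[symmetric] c2[symmetric] by auto
  have Am: "A - 1 > 0" using A1 by simp
  have yk: "kp z * (A-1) < y - 1" using y by simp
  have "(A-1)*x > t*(y-1)" using l(1) by (simp add: pe lin_def algebra_simps)
  moreover have "t*(y-1) > t*(kp z*(A-1))" using yk t0 by simp
  ultimately have "(A-1)*x > (A-1)*(t * kp z)" by (simp add: algebra_simps)
  then have x0: "t * kp z < x" using Am by simp
  have "(A-1)*(1-x) > (1-t)*(y-1)" using l(2) by (simp add: pe lin_def algebra_simps)
  moreover have "(1-t)*(y-1) > (1-t)*(kp z*(A-1))" using yk t1 by simp
  ultimately have "(A-1)*(1-x) > (A-1)*((1-t) * kp z)" by (simp add: algebra_simps)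
  then have x1: "x < 1 - (1-t) * kp z" using Am by simp
  have "h \<le> 1 + kp z*(A-1)" using h1 kp0 Am by (smt (verit) mult_pos_pos)
  then have "p \<in> Tup" using p UT_mono unfolding P2_def by blast
  then have "p \<in> interior Qh" using TT_int by blast
  then show "p \<in> E' z" using x0 x1 z1 by (intro vert_ok') (auto simp: pe)
qed

lemma P3_sub: "P3 z \<subseteq> E' z"
proof
  fix p assume p: "p \<in> P3 z"
  obtain x y where pe: "p = (x, y)" by (cases p)
  have y: "-(kp z*B) < y" "y < 0" and x: "t * kp z < x" "x < 1 - (1-t) * kp z"
    using p by (auto simp: P3_def trap_def pe)
  have yk: "- y < kp z * B" using y by simp
  have "t*(-y) < t*(kp z*B)" using mult_strict_left_mono[OF yk t0] .
  also have "t*(kp z*B) = B*(t * kp z)" by simp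
  also have "\<dots> < B*x" using x(1) B0 by simp
  finally have l3: "lin (-B) (-t) p < 0" by (simp add: pe lin_def algebra_simps)
  have "(1-t)*(-y) < (1-t)*(kp z*B)" using mult_strict_left_mono[OF yk] t1 by simp
  also have "(1-t)*(kp z*B) = B*((1-t) * kp z)" by simp
  also have "\<dots> < B*(1-x)" using x(2) B0 by simp
  finally have l4: "lin B (t-1) p < B" by (simp add: pe lin_def algebra_simps)
  have "kp z * B < B" using kp1 B0 by simp
  then have yB: "-B < y" using y by simp
  have "y < h" using h0 y by simp
  then have "p \<in> Tlow" using yB l3 l4 unfolding Tlow_def trap_def mem_Collect_eq c3[symmetric] c4[symmetric] by (simp add: pe)
  then have "p \<in> interior Qh" using TT_int by blast
  then show "p \<in> E' z" using x z1 by (intro vert_ok') (auto simp: pe)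
qed

lemma P4_sub: "P4 z \<subseteq> E' z"
proof
  fix p assume p: "p \<in> P4 z"
  obtain x y where pe: "p = (x, y)" by (cases p)
  have y: "-B < y" "y < -(kp z*B)" using p by (auto simp: P4_def LTr_def trap_def pe)
  have l: "lin (-B) (-t) p < 0" "lin B (t-1) p < B"
    using p unfolding P4_def LTr_def trap_def mem_Collect_eq c3[symmetric] c4[symmetric] by auto
  have yk: "kp z * B < - y" using y by simp
  have "B*x > t*(-y)" using l(1) by (simp add: pe lin_def algebra_simps)
  moreover have "t*(-y) > t*(kp z*B)" using mult_strict_left_mono[OF yk t0] .
  ultimately have "B*x > B*(t * kp z)" by (simp add: algebra_simps)
  then have x0: "t * kp z < x" using B0 by simp
  have "B*(1-x) > (1-t)*(-y)" using l(2) by (simp add: pe lin_def algebra_simps)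
  moreover have "(1-t)*(-y) > (1-t)*(kp z*B)" using mult_strict_left_mono[OF yk] t1 by simp
  ultimately have "B*(1-x) > B*((1-t) * kp z)" by (simp add: algebra_simps)
  then have x1: "x < 1 - (1-t) * kp z" using B0 by simp
  have "-(kp z*B) \<le> h" using h0 kp0 B0 by (smt (verit) mult_pos_pos)
  then have "p \<in> Tlow" using p LT_mono unfolding P4_def by blast
  then have "p \<in> interior Qh" using TT_int by blast
  then show "p \<in> E' z" using x0 x1 z1 by (intro vert_ok') (auto simp: pe)
qed


lemma P1_fm: "P1 z \<in> fmeasurable lebesgue" and mP1: "measure lebesgue (P1 z) = (1 - kp z)*(kp z*(A-1))"
proof -
  have a: "1 \<le> 1 + kp z*(A-1)" using kp0 A1 by simp
  have b: "t * kp z + 0*y \<le> 1 - (1-t) * kp z + 0*y" for y using kp1 by (simp add: algebra_simps)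
  show "P1 z \<in> fmeasurable lebesgue" unfolding P1_def by (rule trap_fmeas[OF a b])
  have "measure lebesgue (P1 z) = (1 - (1-t) * kp z - t * kp z)*(1 + kp z*(A-1) - 1) + (0-0)*((1 + kp z*(A-1))^2 - 1^2)/2"
    unfolding P1_def by (rule trap_measure[OF a b])
  then show "measure lebesgue (P1 z) = (1 - kp z)*(kp z*(A-1))" by (simp add: algebra_simps)
qed

lemma P3_fm: "P3 z \<in> fmeasurable lebesgue" and mP3: "measure lebesgue (P3 z) = (1 - kp z)*(kp z*B)"
proof -
  have a: "-(kp z*B) \<le> 0" using kp0 B0 by simp
  have b: "t * kp z + 0*y \<le> 1 - (1-t) * kp z + 0*y" for y using kp1 by (simp add: algebra_simps)
  show "P3 z \<in> fmeasurable lebesgue" unfolding P3_def by (rule trap_fmeas[OF a b])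
  have "measure lebesgue (P3 z) = (1 - (1-t) * kp z - t * kp z)*(0 - (-(kp z*B))) + (0-0)*(0^2 - (-(kp z*B))^2)/2"
    unfolding P3_def by (rule trap_measure[OF a b])
  then show "measure lebesgue (P3 z) = (1 - kp z)*(kp z*B)" by (simp add: algebra_simps)
qed

lemma Y2: "1 + kp z*(A-1) \<le> A"
proof -
  have "kp z*(A-1) \<le> 1*(A-1)" using kp1 A1 by (intro mult_right_mono) auto
  then show ?thesis by simp
qed
lemma Y4: "-B \<le> -(kp z*B)" using kp1 B0 by simp

lemma P2_fm: "P2 z \<in> fmeasurable lebesgue" unfolding P2_def by (rule UT_fm[OF Y2])
lemma P4_fm: "P4 z \<in> fmeasurable lebesgue" unfolding P4_def by (rule LT_fm[OF Y4])

lemma mP2: "measure lebesgue (P2 z) = (A-1)*(1 - kp z)^2/2"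
proof -
  have "measure lebesgue (P2 z) = (A - (1 + kp z*(A-1)))^2/(2*(A-1))" unfolding P2_def by (rule mUT[OF Y2])
  also have "A - (1 + kp z*(A-1)) = (A-1)*(1 - kp z)" by (simp add: algebra_simps)
  finally show ?thesis using sq_alg2[OF Aneq(1), of "1 - kp z"] by simp
qed

lemma mP4: "measure lebesgue (P4 z) = B*(1 - kp z)^2/2"
proof -
  have "measure lebesgue (P4 z) = (-(kp z*B) + B)^2/(2*B)" unfolding P4_def by (rule mLT[OF Y4])
  also have "-(kp z*B) + B = B*(1 - kp z)" by (simp add: algebra_simps)
  finally show ?thesis using sq_alg2[OF Bneq, of "1 - kp z"] by simp
qed

lemma mP_sum: "measure lebesgue (P1 z) + measure lebesgue (P2 z) + measure lebesgue (P3 z) + measure lebesgue (P4 z) = k*(1 - (kp z)^2)/2"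
proof -
  have "measure lebesgue (P1 z) + measure lebesgue (P2 z) + measure lebesgue (P3 z) + measure lebesgue (P4 z)
    = (A - 1 + B) * ((1 - kp z)*kp z + (1 - kp z)^2/2)"
    unfolding mP1 mP2 mP3 mP4 by (simp add: field_simps power2_eq_square)
  also have "A - 1 + B = k" by (simp add: k_def)
  finally show ?thesis by (simp add: field_simps power2_eq_square)
qed

lemma RH_y: "p \<in> RH z \<Longrightarrow> 0 < snd p \<and> snd p < 1"
proof -
  assume p: "p \<in> RH z"
  have "B/(z-1) > 0" using B0 z1 by simp
  moreover have "(z-A)/(z-1) < 1" using z1 A1 by (simp add: divide_less_eq)
  ultimately show ?thesis using p by (auto simp: RH_def)
qed

lemma U_measure: "measure lebesgue (RH z \<union> P1 z \<union> P2 z \<union> P3 z \<union> P4 z) = measure lebesgue (RH z) + k*(1 - (kp z)^2)/2"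
proof -
  have y1: "p \<in> P1 z \<Longrightarrow> 1 < snd p \<and> snd p < 1 + kp z*(A-1)" for p by (auto simp: P1_def trap_def)
  have y2: "p \<in> P2 z \<Longrightarrow> 1 + kp z*(A-1) < snd p" for p by (auto simp: P2_def UTr_def trap_def)
  have y3: "p \<in> P3 z \<Longrightarrow> -(kp z*B) < snd p \<and> snd p < 0" for p by (auto simp: P3_def trap_def)
  have y4: "p \<in> P4 z \<Longrightarrow> snd p < -(kp z*B)" for p by (auto simp: P4_def LTr_def trap_def)
  have c1: "1 \<le> 1 + kp z*(A-1)" using kp0 A1 by simp
  have c2: "-(kp z*B) < 0" using kp0 B0 by simp
  have d1: "RH z \<inter> P1 z = {}"
  proof (rule ccontr)
    assume "RH z \<inter> P1 z \<noteq> {}" then obtain p where "p \<in> RH z" "p \<in> P1 z" by blast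
    then show False using RH_y y1 by fastforce
  qed
  have d2: "(RH z \<union> P1 z) \<inter> P2 z = {}"
  proof (rule ccontr)
    assume "(RH z \<union> P1 z) \<inter> P2 z \<noteq> {}" then obtain p where "p \<in> RH z \<or> p \<in> P1 z" "p \<in> P2 z" by blast
    then show False using RH_y[of p] y1[of p] y2[of p] c1 by auto
  qed
  have d3: "(RH z \<union> P1 z \<union> P2 z) \<inter> P3 z = {}"
  proof (rule ccontr)
    assume "(RH z \<union> P1 z \<union> P2 z) \<inter> P3 z \<noteq> {}" then obtain p where "p \<in> RH z \<or> p \<in> P1 z \<or> p \<in> P2 z" "p \<in> P3 z" by blast
    then show False using RH_y[of p] y1[of p] y2[of p] y3[of p] c1 by auto
  qed
  have d4: "(RH z \<union> P1 z \<union> P2 z \<union> P3 z) \<inter> P4 z = {}"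
  proof (rule ccontr)
    assume "(RH z \<union> P1 z \<union> P2 z \<union> P3 z) \<inter> P4 z \<noteq> {}" then obtain p where "p \<in> RH z \<or> p \<in> P1 z \<or> p \<in> P2 z \<or> p \<in> P3 z" "p \<in> P4 z" by blast
    then show False using RH_y[of p] y1[of p] y2[of p] y3[of p] y4[of p] c1 c2 by auto
  qed
  have "measure lebesgue (RH z \<union> P1 z \<union> P2 z \<union> P3 z \<union> P4 z)
      = measure lebesgue (RH z \<union> P1 z \<union> P2 z \<union> P3 z) + measure lebesgue (P4 z)"
    by (rule measure_Un_disj[OF _ P4_fm d4]) (use RH_fm P1_fm P2_fm P3_fm in auto)
  also have "measure lebesgue (RH z \<union> P1 z \<union> P2 z \<union> P3 z) = measure lebesgue (RH z \<union> P1 z \<union> P2 z) + measure lebesgue (P3 z)"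
    by (rule measure_Un_disj[OF _ P3_fm d3]) (use RH_fm P1_fm P2_fm in auto)
  also have "measure lebesgue (RH z \<union> P1 z \<union> P2 z) = measure lebesgue (RH z \<union> P1 z) + measure lebesgue (P2 z)"
    by (rule measure_Un_disj[OF _ P2_fm d2]) (use RH_fm P1_fm in auto)
  also have "measure lebesgue (RH z \<union> P1 z) = measure lebesgue (RH z) + measure lebesgue (P1 z)"
    by (rule measure_Un_disj[OF RH_fm P1_fm d1])
  finally show ?thesis using mP_sum by simp
qed

end

lemma E'_sets: "E' z \<in> sets lebesgue"
  unfolding E'_def by (rule G_meas)

lemma E'_fm: "E' z \<in> fmeasurable lebesgue"
  by (rule fmeasurableI2[OF Qh_lmeas _ E'_sets]) (auto simp: E'_def dest: interior_subset[THEN subsetD])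

lemma ratio_bound:
  assumes z1: "z > 1"
  shows "cor1_bound (k+1) z \<le> measure lebesgue (E' z) / measure lebesgue Qh"
proof -
  define Ar where "Ar = (k+1)^2/(2*k)"
  have Ar0: "Ar > 0" using k0 by (simp add: Ar_def)
  have mQ: "measure lebesgue Qh = Ar" by (simp add: mQh Ar_def)
  have mono: "S \<subseteq> E' z \<Longrightarrow> S \<in> sets lebesgue \<Longrightarrow> measure lebesgue S \<le> measure lebesgue (E' z)" for S
    by (rule measure_mono_fmeasurable[OF _ _ E'_fm])
  have c0: "z - 1 > 0" using z1 by simp
  have zc: "z = (z-1) + 1" by simp
  show ?thesis
  proof (cases "z \<le> k + 1")
    case True
    then show ?thesis unfolding mQ cor1_bound_def using Ar0 by simp
  next
    case False
    then have zk: "z > k + 1" by simp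
    have RHm: "measure lebesgue (RH z) \<le> measure lebesgue (E' z)"
      by (rule mono[OF RH_E[OF z1] RH_sets])
    show ?thesis
    proof (cases "z \<le> (k+1)/k")
      case True
      have "cor1_bound (k+1) z = (z - (k+1)) * (2*(k+1)*z - (k+1) - z) / ((k+1)^2 * (z-1)^2)"
        unfolding cor1_bound_def using zk True by simp
      also have "\<dots> = (Ar - k*z^2/(2*(z-1)^2)) / Ar"
        using final_alg2[OF k0 c0 refl] unfolding Ar_def by simp
      also have "\<dots> \<le> measure lebesgue (E' z) / Ar"
        using RH_measure[OF zk] RHm Ar0 unfolding Ar_def by (intro divide_right_mono) auto
      finally show ?thesis by (simp add: mQ)
    next
      case False
      have "k*(z-1) > 1" using False k0 by (simp add: field_simps)
      then have kp1: "kp z < 1" by (simp add: kp_def)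
      have kpe: "kp z = 1/(k*(z-1))" by (simp add: kp_def)
      have U_sets: "RH z \<union> P1 z \<union> P2 z \<union> P3 z \<union> P4 z \<in> sets lebesgue"
        using RH_sets P1_fm[OF z1 kp1] P2_fm[OF z1 kp1] P3_fm[OF z1 kp1] P4_fm[OF z1 kp1] by auto
      have Usub: "RH z \<union> P1 z \<union> P2 z \<union> P3 z \<union> P4 z \<subseteq> E' z"
        using RH_E[OF z1] P1_sub[OF z1 kp1] P2_sub[OF z1 kp1] P3_sub[OF z1 kp1] P4_sub[OF z1 kp1] by blast
      have "cor1_bound (k+1) z = ((z - (k+1)) * (2*(k+1)*z - (k+1) - z) + ((k+1)-1)^2*(z-1)^2 - 1) / ((k+1)^2 * (z-1)^2)"
        unfolding cor1_bound_def using zk False by simp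
      also have "\<dots> = (Ar - k*z^2/(2*(z-1)^2) + k*(1 - (kp z)^2)/2) / Ar"
        using final_alg3[OF k0 c0 refl] unfolding Ar_def kpe by simp
      also have "\<dots> \<le> measure lebesgue (E' z) / Ar"
      proof (intro divide_right_mono)
        have "Ar - k*z^2/(2*(z-1)^2) + k*(1 - (kp z)^2)/2 \<le> measure lebesgue (RH z) + k*(1 - (kp z)^2)/2"
          using RH_measure[OF zk] unfolding Ar_def by simp
        also have "\<dots> = measure lebesgue (RH z \<union> P1 z \<union> P2 z \<union> P3 z \<union> P4 z)"
          using U_measure[OF z1 kp1] by simp
        also have "\<dots> \<le> measure lebesgue (E' z)" by (rule mono[OF Usub U_sets])
        finally show "Ar - k*z^2/(2*(z-1)^2) + k*(1 - (kp z)^2)/2 \<le> measure lebesgue (E' z)" .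
      qed (use Ar0 in simp)
      finally show ?thesis by (simp add: mQ)
    qed
  qed
qed

lemma range_V: "range V = {va, vb, vc, vd}"
proof
  show "range V \<subseteq> {va, vb, vc, vd}" using V_range by blast
  have "V 0 = va" "V 1 = vb" "V 2 = vc" "V 3 = vd" by (simp_all add: V_def quad_vertices_def)
  then show "{va, vb, vc, vd} \<subseteq> range V" by (metis empty_subsetI insert_subset rangeI)
qed

lemma PQ_eq:
  assumes ext: "{x. x extreme_point_of Qh} = {va, vb, vc, vd}" and z: "z > 1"
  shows "PQ V z = measure lebesgue (E' z) / measure lebesgue Qh"
proof -
  have Q: "convex hull (range V) = Qh" by (simp add: range_V Qh_def)
  have "{f \<in> interior Qh. strength (cut_closure (splits_at f \<union> {Qh}) f (\<lambda>j. V j - f))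
                 (cut_closure (splits_at f) f (\<lambda>j. V j - f)) \<le> ereal z} = E' z"
  proof -
    have "strength (cut_closure (splits_at f \<union> {Qh}) f (\<lambda>j. V j - f)) (cut_closure (splits_at f) f (\<lambda>j. V j - f)) \<le> ereal z
       \<longleftrightarrow> (\<forall>s\<in>cut_closure (splits_at f) f (\<lambda>j. V j - f). 1/z \<le> (\<Sum>j\<in>UNIV. s $ j))"
      if f: "f \<in> interior Qh" for f
    proof (rule strength_char[OF z])
      fix j
      have "V j extreme_point_of Qh" using ext V_range[of j] by blast
      then show "psi Qh f (V j - f) = 1" by (rule psi_vertex[OF f])
    qed
    then show ?thesis by (auto simp: E'_def)
  qed
  then show ?thesis unfolding PQ_def Q Let_def by simp
qed

lemma E'_le: "measure lebesgue (E' z) \<le> measure lebesgue Qh"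
  by (rule measure_mono_fmeasurable[OF _ E'_sets Qh_lmeas]) (auto simp: E'_def dest: interior_subset[THEN subsetD])

lemma Qh_pos: "measure lebesgue Qh > 0" using k0 by (simp add: mQh)

end


lemma main_key:
  assumes H: "cor1_hyp a b c d" and z: "1 < z"
  shows "cor1_bound (lattice_width (convex hull {a, b, c, d})) z \<le> PQ (quad_vertices a b c d) z
    \<and> PQ (quad_vertices a b c d) z \<le> 1 \<and> 1 < lattice_width (convex hull {a, b, c, d})"
proof -
  define t where "t = fst a"
  define A where "A = snd a"
  define B where "B = - snd b"
  have h: "(\<forall>v\<in>{a, b, c, d}. fst v \<in> \<rat> \<and> snd v \<in> \<rat>)"
      "card {a, b, c, d} = 4"
      "{x. x extreme_point_of (convex hull {a, b, c, d})} = {a, b, c, d}"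
      "maximal_lattice_free (convex hull {a, b, c, d})"
      "(0, 0) \<in> open_segment b c" "(1, 0) \<in> open_segment b d"
      "(0, 1) \<in> open_segment a c" "(1, 1) \<in> open_segment a d"
      "0 < fst a" "fst a \<le> fst b" "fst b < 1" "1 < snd a" "snd b < 0"
      "- snd b \<le> snd a - 1"
      "lattice_width (convex hull {a, b, c, d}) = snd a - snd b"
      "fst a = fst b"
    using H unfolding cor1_hyp_def Let_def by auto
  interpret K: kite t A B
    by standard (use h in \<open>auto simp: t_def A_def B_def\<close>)
  have ae: "a = K.va" unfolding K.va_def by (simp add: t_def A_def)
  have be: "b = K.vb" unfolding K.vb_def using h(16) by (simp add: t_def B_def prod_eq_iff)
  have ae': "a = (t, A)" and be': "b = (t, -B)" using ae be by (simp_all add: K.va_def K.vb_def)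
  have "c = (-t/(A+B-1), B/(A+B-1))"
    by (rule solve_c) (use h K.t0 K.A1 K.B0 ae' be' in auto)
  then have ce: "c = K.vc" by (simp add: K.vc_eq K.k_def)
  have "d = ((A+B-t)/(A+B-1), B/(A+B-1))"
    by (rule solve_d) (use h K.t0 K.t1 K.A1 K.B0 ae' be' in auto)
  then have de: "d = K.vd" by (simp add: K.vd_eq K.k_def)
  have Qe: "convex hull {a, b, c, d} = K.Qh" by (simp add: K.Qh_def ae be ce de)
  have Ve: "quad_vertices a b c d = K.V" by (simp add: K.V_def ae be ce de)
  have we: "lattice_width (convex hull {a, b, c, d}) = K.k + 1"
    using h(15) unfolding K.k_def by (simp add: A_def B_def)
  have ext: "{x. x extreme_point_of K.Qh} = {K.va, K.vb, K.vc, K.vd}"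
    using h(3) unfolding K.Qh_def by (simp add: ae be ce de)
  have PQe: "PQ (quad_vertices a b c d) z = measure lebesgue (K.E' z) / measure lebesgue K.Qh"
    unfolding Ve by (rule K.PQ_eq[OF ext z])
  have le1: "PQ (quad_vertices a b c d) z \<le> 1"
    unfolding PQe using K.E'_le K.Qh_pos by (simp add: divide_le_eq_1)
  show ?thesis using K.ratio_bound[OF z] le1 K.k0 by (simp add: we PQe)
qed

lemma bound_close:
  fixes z \<epsilon> :: real
  assumes z: "z > 1" and e: "\<epsilon> > 0"
  shows "\<exists>\<delta>>0. \<forall>w. 1 < w \<and> w < 1 + \<delta> \<longrightarrow> 1 - \<epsilon> < cor1_bound w z"
proof -
  define q where "q = z^2/(z-1)^2"
  have q0: "q > 0" using z by (simp add: q_def)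
  define \<delta> where "\<delta> = min (min (z-1) (1/(z-1))) (min 1 (\<epsilon>/(2*q)))"
  have d0: "\<delta> > 0" using z e q0 by (simp add: \<delta>_def)
  show ?thesis
  proof (intro exI[of _ \<delta>] conjI allI impI d0)
    fix w assume w: "1 < w \<and> w < 1 + \<delta>"
    define e' where "e' = w - 1"
    have e'0: "e' > 0" and e'd: "e' < \<delta>" using w by (auto simp: e'_def)
    have wz: "\<not> z \<le> w" using e'd by (simp add: \<delta>_def e'_def)
    have "e' * (z - 1) < 1"
    proof -
      have "e' < 1/(z-1)" using e'd by (simp add: \<delta>_def)
      then show ?thesis using z by (simp add: field_simps)
    qed
    then have zw: "z \<le> w/(w-1)" using e'0 by (simp add: e'_def field_simps)
    have c0: "z - 1 > 0" using z by simp
    have "cor1_bound w z = (z - w) * (2*w*z - w - z) / (w^2 * (z-1)^2)"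
      unfolding cor1_bound_def using wz zw by simp
    also have "(z - w) * (2*w*z - w - z) = w^2*(z-1)^2 - z^2*e'^2"
      by (simp add: e'_def power2_eq_square algebra_simps)
    also have "(w^2*(z-1)^2 - z^2*e'^2) / (w^2 * (z-1)^2) = 1 - q*e'^2/w^2"
      using w c0 by (simp add: q_def field_simps)
    finally have beq: "cor1_bound w z = 1 - q*e'^2/w^2" .
    have w2: "1 \<le> w^2" using w by (simp add: one_le_power)
    have "q*e'^2/w^2 \<le> q*e'^2/1"
      using w2 q0 by (intro divide_left_mono) auto
    then have "q*e'^2/w^2 \<le> q*e'^2" by simp
    also have "q*e'^2 \<le> q*e'"
    proof -
      have "e' \<le> 1" using e'd by (simp add: \<delta>_def)
      then have "e'^2 \<le> e'" using e'0 by (simp add: power2_eq_square mult_le_cancel_left1)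
      then show ?thesis using q0 by simp
    qed
    also have "q*e' < q*(\<epsilon>/(2*q))"
    proof -
      have "e' < \<epsilon>/(2*q)" using e'd by (simp add: \<delta>_def)
      then show ?thesis by (rule mult_strict_left_mono[OF _ q0])
    qed
    also have "q*(\<epsilon>/(2*q)) = \<epsilon>/2" using q0 by simp
    finally have "q*e'^2/w^2 < \<epsilon>/2" .
    then show "1 - \<epsilon> < cor1_bound w z" using beq e by linarith
  qed
qed

theorem corollary1:
  shows "(\<forall>a b c d z. cor1_hyp a b c d \<and> 1 < z \<longrightarrow>
            cor1_bound (lattice_width (convex hull {a, b, c, d})) z \<le> PQ (quad_vertices a b c d) z) \<and>
         (\<forall>z > 1. \<forall>\<epsilon> > 0. \<exists>\<delta> > 0. \<forall>a b c d.
            cor1_hyp a b c d \<and> lattice_width (convex hull {a, b, c, d}) < 1 + \<delta> \<longrightarrow>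
            \<bar>PQ (quad_vertices a b c d) z - 1\<bar> < \<epsilon>)"
proof (intro conjI allI impI)
  fix a b c d and z :: real
  assume "cor1_hyp a b c d \<and> 1 < z"
  then show "cor1_bound (lattice_width (convex hull {a, b, c, d})) z \<le> PQ (quad_vertices a b c d) z"
    using main_key by blast
next
  fix z \<epsilon> :: real
  assume z: "z > 1" and e: "\<epsilon> > 0"
  obtain \<delta> where d0: "\<delta> > 0" and dd: "\<And>w. 1 < w \<and> w < 1 + \<delta> \<Longrightarrow> 1 - \<epsilon> < cor1_bound w z"
    using bound_close[OF z e] by blast
  show "\<exists>\<delta>>0. \<forall>a b c d. cor1_hyp a b c d \<and> lattice_width (convex hull {a, b, c, d}) < 1 + \<delta> \<longrightarrow>
            \<bar>PQ (quad_vertices a b c d) z - 1\<bar> < \<epsilon>"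
  proof (intro exI[of _ \<delta>] conjI allI impI d0)
    fix a b c d
    assume H: "cor1_hyp a b c d \<and> lattice_width (convex hull {a, b, c, d}) < 1 + \<delta>"
    have k: "cor1_bound (lattice_width (convex hull {a, b, c, d})) z \<le> PQ (quad_vertices a b c d) z"
      "PQ (quad_vertices a b c d) z \<le> 1" "1 < lattice_width (convex hull {a, b, c, d})"
      using main_key[OF _ z] H by blast+
    have "1 - \<epsilon> < cor1_bound (lattice_width (convex hull {a, b, c, d})) z"
      using dd k(3) H by blast
    then show "\<bar>PQ (quad_vertices a b c d) z - 1\<bar> < \<epsilon>" using k by simp
  qed
qed

end
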